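(* Let $n\ge1$, let $q_1,q_2$ be powers of a prime $p$, $q=q_1\otimes q_2$, and $R=A(n,q_1,q_2)$. Let $S$ be the subring of block-diagonal elements $\begin{pmatrix} A & 0\\ 0 & b\end{pmatrix}$ ($A\in M_n(\mathbb{F}_{q_1})$, $b\in\mathbb{F}_{q_2}$) and $J$ the set of elements $\begin{pmatrix} 0 & v\\ 0 & 0\end{pmatrix}$ ($v\in M_{n\times1}(\mathbb{F}_q)$). For $x\in J$ let $C_S(x)=\{s\in S: sx=xs\}$. Let $\mathcal{M}$ be a set of maximal subrings of $S$ of smallest possible cardinality such that $$\bigcup_{x\in J\setminus\{0\}} C_S(x)\subseteq\bigcup_{M\in\mathcal{M}} M,$$ and let $\mathscr{Z}=\{M\oplus J: M\in\mathcal{M}\}$. Then: (1) $\mathscr{S}(R)\cup\mathscr{Z}$ is a cover of $R$; (2) if $R$ is $\sigma$-elementary, then $\mathscr{S}(R)\cup\mathscr{Z}$ is a minimal cover of $R$; (3) $|\mathscr{Z}|\le (|J|-1)/(q-1)=(q^n-1)/(q-1)$; (4) if $R$ is $\sigma$-elementary, then $q^n+1\le\sigma(R)\le (q^{n+1}-1)/(q-1)$.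
   Context: Rings are associative and need not have an identity; a subring is an additive subgroup closed under multiplication. A cover of a ring $R$ is a collection of proper subrings of $R$ whose union is $R$; $\sigma(R)$ is the minimum cardinality of a cover ($\infty$ if none exists), and a minimal cover is one of cardinality $\sigma(R)$. $R$ is $\sigma$-elementary if $\sigma(R)<\sigma(R/I)$ for every nonzero two-sided ideal $I$. For powers $q_1=p^{d_1}$, $q_2=p^{d_2}$ of a prime $p$, $q_1\otimes q_2:=p^{\operatorname{lcm}(d_1,d_2)}$; $\mathbb{F}_{q_1},\mathbb{F}_{q_2}$ are subfields of $\mathbb{F}_q$. $A(n,q_1,q_2)$ is the subring of $M_{n+1}(\mathbb{F}_q)$ of all block matrices $\begin{pmatrix} A & v\\ 0 & b\end{pmatrix}$ with $A\in M_n(\mathbb{F}_{q_1})$, $v\in M_{n\times 1}(\mathbb{F}_q)$, $b\in\mathbb{F}_{q_2}$. $J$ is the Jacobson radical of $R$, and $\mathscr{S}(R)$ is the set of all semisimple complements to $J$ in $R$, i.e. $\mathbb{F}_p$-subalgebras $T$ of $R$ with $R=T\oplus J$; these are exactly the conjugates $(1+x)^{-1}S(1+x)$, $x\in J$. For a subring $M$ of $S$, $M\oplus J=\{m+x: m\in M, x\in J\}$. *)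

theory Defs
  imports "HOL-Algebra.QuotRing" "HOL-Library.Extended_Nat" "HOL-Computational_Algebra.Primes"
begin

text \<open>A subring in the sense of the paper: an additive subgroup closed under
multiplication (no identity required).\<close>
definition nsubring :: "('c, 'm) ring_scheme \<Rightarrow> 'c set \<Rightarrow> bool" where
  "nsubring R H \<longleftrightarrow> H \<subseteq> carrier R \<and> \<zero>\<^bsub>R\<^esub> \<in> H \<and>
     (\<forall>a\<in>H. \<ominus>\<^bsub>R\<^esub> a \<in> H) \<and>
     (\<forall>a\<in>H. \<forall>b\<in>H. a \<oplus>\<^bsub>R\<^esub> b \<in> H \<and> a \<otimes>\<^bsub>R\<^esub> b \<in> H)"

definition is_cover :: "('c, 'm) ring_scheme \<Rightarrow> 'c set set \<Rightarrow> bool" where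
  "is_cover R C \<longleftrightarrow> (\<forall>H\<in>C. nsubring R H \<and> H \<noteq> carrier R) \<and> \<Union>C = carrier R"

definition ecard :: "'x set \<Rightarrow> enat" where
  "ecard A = (if finite A then enat (card A) else \<infinity>)"

text \<open>Covering number; infinity if no cover exists.\<close>
definition sigma :: "('c, 'm) ring_scheme \<Rightarrow> enat" where
  "sigma R = (INF C \<in> {C. is_cover R C}. ecard C)"

definition minimal_cover :: "('c, 'm) ring_scheme \<Rightarrow> 'c set set \<Rightarrow> bool" where
  "minimal_cover R C \<longleftrightarrow> is_cover R C \<and> ecard C = sigma R"

definition sigma_elementary :: "('c, 'm) ring_scheme \<Rightarrow> bool" where
  "sigma_elementary R \<longleftrightarrow>
     (\<forall>I. ideal I R \<and> I \<noteq> {\<zero>\<^bsub>R\<^esub>} \<longrightarrow> sigma R < sigma (R Quot I))"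

definition ssum :: "('c, 'm) ring_scheme \<Rightarrow> 'c set \<Rightarrow> 'c set \<Rightarrow> 'c set" where
  "ssum R A B = {a \<oplus>\<^bsub>R\<^esub> b | a b. a \<in> A \<and> b \<in> B}"

definition is_subfield :: "'a::field set \<Rightarrow> bool" where
  "is_subfield K \<longleftrightarrow> 0 \<in> K \<and> 1 \<in> K \<and>
     (\<forall>x\<in>K. \<forall>y\<in>K. x + y \<in> K \<and> x * y \<in> K) \<and>
     (\<forall>x\<in>K. - x \<in> K \<and> inverse x \<in> K)"

text \<open>Matrices of size N x N over 'a are functions nat => nat => 'a vanishing outside
{0..<N} x {0..<N}. For A(n,q1,q2) we use N = n+1; indices 0..n-1 form the
n x n block, index n is the last row/column.\<close>

definition mat_mul :: "nat \<Rightarrow> (nat \<Rightarrow> nat \<Rightarrow> 'a::field) \<Rightarrow> (nat \<Rightarrow> nat \<Rightarrow> 'a) \<Rightarrow> nat \<Rightarrow> nat \<Rightarrow> 'a" where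
  "mat_mul N A B = (\<lambda>i j. \<Sum>k<N. A i k * B k j)"

definition mat_one :: "nat \<Rightarrow> nat \<Rightarrow> nat \<Rightarrow> 'a::field" where
  "mat_one N = (\<lambda>i j. if i = j \<and> i < N then 1 else 0)"

definition Amat :: "nat \<Rightarrow> 'a::field set \<Rightarrow> 'a set \<Rightarrow> (nat \<Rightarrow> nat \<Rightarrow> 'a) set" where
  "Amat n K1 K2 = {M. (\<forall>i j. n < i \<or> n < j \<longrightarrow> M i j = 0) \<and>
      (\<forall>i<n. \<forall>j<n. M i j \<in> K1) \<and> (\<forall>j<n. M n j = 0) \<and> M n n \<in> K2}"

definition Aring :: "nat \<Rightarrow> 'a::field set \<Rightarrow> 'a set \<Rightarrow> (nat \<Rightarrow> nat \<Rightarrow> 'a) ring" where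
  "Aring n K1 K2 =
     \<lparr>carrier = Amat n K1 K2,
      monoid.mult = mat_mul (Suc n),
      one = mat_one (Suc n),
      zero = (\<lambda>i j. 0),
      add = (\<lambda>A B i j. A i j + B i j)\<rparr>"

definition Sdiag :: "nat \<Rightarrow> 'a::field set \<Rightarrow> 'a set \<Rightarrow> (nat \<Rightarrow> nat \<Rightarrow> 'a) set" where
  "Sdiag n K1 K2 = {M \<in> Amat n K1 K2. \<forall>i<n. M i n = 0}"

definition Jrad :: "nat \<Rightarrow> (nat \<Rightarrow> nat \<Rightarrow> 'a::field) set" where
  "Jrad n = {M. \<forall>i j. (i < n \<and> j = n) \<or> M i j = 0}"

definition centralizer_in :: "('c, 'm) ring_scheme \<Rightarrow> 'c set \<Rightarrow> 'c \<Rightarrow> 'c set" where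
  "centralizer_in R S x = {s \<in> S. s \<otimes>\<^bsub>R\<^esub> x = x \<otimes>\<^bsub>R\<^esub> s}"

definition maximal_subring_of :: "('c, 'm) ring_scheme \<Rightarrow> 'c set \<Rightarrow> 'c set \<Rightarrow> bool" where
  "maximal_subring_of R S M \<longleftrightarrow> nsubring R M \<and> M \<subset> S \<and>
     (\<forall>M'. nsubring R M' \<and> M \<subseteq> M' \<and> M' \<subset> S \<longrightarrow> M' = M)"

text \<open>Semisimple complements T of J in R: subrings T (automatically F_p-subalgebras)
with R = T (+) J as a direct sum of additive groups.\<close>
definition scompl :: "('c, 'm) ring_scheme \<Rightarrow> 'c set \<Rightarrow> 'c set set" where
  "scompl R J = {T. nsubring R T \<and> ssum R T J = carrier R \<and> T \<inter> J = {\<zero>\<^bsub>R\<^esub>}}"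

end

theory Submission imports Defs begin

lemma subfield_sum:
  assumes "is_subfield K" "\<And>k. k \<in> A \<Longrightarrow> f k \<in> K"
  shows "sum f A \<in> K"
  using assms(2)
proof (induction A rule: infinite_finite_induct)
  case (infinite A) then show ?case using assms(1) by (simp add: is_subfield_def)
next
  case empty then show ?case using assms(1) by (simp add: is_subfield_def)
next
  case (insert x F) then show ?case using assms(1) by (simp add: is_subfield_def)
qed

lemma mat_mul_assoc: "mat_mul N (mat_mul N A B) C = mat_mul N A (mat_mul N B C)"
  unfolding mat_mul_def
  by (auto simp: sum_distrib_left sum_distrib_right mult.assoc intro!: ext) (rule sum.swap)

lemma mat_mul_ldist: "mat_mul N (\<lambda>i j. A i j + B i j) C = (\<lambda>i j. mat_mul N A C i j + mat_mul N B C i j)"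
  unfolding mat_mul_def by (auto simp: distrib_right sum.distrib intro!: ext)

lemma mat_mul_rdist: "mat_mul N C (\<lambda>i j. A i j + B i j) = (\<lambda>i j. mat_mul N C A i j + mat_mul N C B i j)"
  unfolding mat_mul_def by (auto simp: distrib_left sum.distrib intro!: ext)

lemma mat_mul_Suc: "mat_mul (Suc n) A B i j = (\<Sum>k<n. A i k * B k j) + A i n * B n j"
  unfolding mat_mul_def by simp

locale AR =
  fixes n :: nat and K1 K2 :: "'a::{field,finite} set"
  assumes sf1: "is_subfield K1" and sf2: "is_subfield K2"
begin

abbreviation "Am \<equiv> Amat n K1 K2"
abbreviation "RR \<equiv> Aring n K1 K2"
abbreviation "mm \<equiv> mat_mul (Suc n)"

lemma K1: "0 \<in> K1" "1 \<in> K1" "x \<in> K1 \<Longrightarrow> y \<in> K1 \<Longrightarrow> x + y \<in> K1" "x \<in> K1 \<Longrightarrow> y \<in> K1 \<Longrightarrow> x * y \<in> K1"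
  "x \<in> K1 \<Longrightarrow> - x \<in> K1" "x \<in> K1 \<Longrightarrow> inverse x \<in> K1"
  using sf1 by (auto simp: is_subfield_def)
lemma K2: "0 \<in> K2" "1 \<in> K2" "x \<in> K2 \<Longrightarrow> y \<in> K2 \<Longrightarrow> x + y \<in> K2" "x \<in> K2 \<Longrightarrow> y \<in> K2 \<Longrightarrow> x * y \<in> K2"
  "x \<in> K2 \<Longrightarrow> - x \<in> K2" "x \<in> K2 \<Longrightarrow> inverse x \<in> K2"
  using sf2 by (auto simp: is_subfield_def)

lemma R_simps[simp]: "carrier RR = Am" "monoid.mult RR = mm" "zero RR = (\<lambda>i j. 0)"
  "add RR = (\<lambda>A B i j. A i j + B i j)" "monoid.one RR = mat_one (Suc n)"
  by (simp_all add: Aring_def)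

lemma Am_out: "M \<in> Am \<Longrightarrow> n < i \<or> n < j \<Longrightarrow> M i j = 0"
  unfolding Amat_def by blast

lemma mm_closed: assumes "M \<in> Am" "N \<in> Am" shows "mm M N \<in> Am"
proof -
  have "\<forall>i j. n < i \<or> n < j \<longrightarrow> mm M N i j = 0"
    using assms by (auto simp: Amat_def mat_mul_def)
  moreover have "mm M N i j \<in> K1" if "i < n" "j < n" for i j
    using assms that unfolding mat_mul_Suc
    by (auto simp: Amat_def intro!: K1 subfield_sum[OF sf1])
  moreover have "mm M N n j = 0" if "j < n" for j
    using assms that unfolding mat_mul_Suc by (auto simp: Amat_def)
  moreover have "mm M N n n \<in> K2"
    using assms unfolding mat_mul_Suc by (auto simp: Amat_def intro!: K2)
  ultimately show ?thesis by (simp add: Amat_def)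
qed

lemma one_Am: "mat_one (Suc n) \<in> Am"
  by (auto simp: Amat_def mat_one_def K1 K2)

lemma mm_one_l: assumes "M \<in> Am" shows "mm (mat_one (Suc n)) M = M"
proof (intro ext)
  fix i j
  have "mm (mat_one (Suc n)) M i j = (\<Sum>k<Suc n. if k = i then (if i < Suc n then M i j else 0) else 0)"
    unfolding mat_mul_def mat_one_def by (intro sum.cong) auto
  also have "\<dots> = M i j" using Am_out[OF assms, of i j] by (simp add: sum.delta)
  finally show "mm (mat_one (Suc n)) M i j = M i j" .
qed

lemma mm_one_r: assumes "M \<in> Am" shows "mm M (mat_one (Suc n)) = M"
proof (intro ext)
  fix i j
  have "mm M (mat_one (Suc n)) i j = (\<Sum>k<Suc n. if k = j then (if j < Suc n then M i j else 0) else 0)"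
    unfolding mat_mul_def mat_one_def by (intro sum.cong) auto
  also have "\<dots> = M i j" using Am_out[OF assms, of i j] by (simp add: sum.delta)
  finally show "mm M (mat_one (Suc n)) i j = M i j" .
qed

lemma add_closed: "M \<in> Am \<Longrightarrow> N \<in> Am \<Longrightarrow> (\<lambda>i j. M i j + N i j) \<in> Am"
  by (auto simp: Amat_def K1 K2)
lemma neg_closed: "M \<in> Am \<Longrightarrow> (\<lambda>i j. - M i j) \<in> Am"
  by (auto simp: Amat_def K1 K2)
lemma zero_Am: "(\<lambda>i j. 0) \<in> Am"
  by (auto simp: Amat_def K1 K2)

lemma ring_R: "ring RR"
proof (rule ringI)
  show "abelian_group RR"
    apply (rule abelian_groupI)
    apply (auto simp: add_closed zero_Am algebra_simps)
    apply (rule bexI[OF _ neg_closed], auto)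
    done
  show "monoid RR"
    by (rule monoidI) (auto simp: mm_closed one_Am mm_one_l mm_one_r mat_mul_assoc)
qed (simp_all add: mat_mul_ldist mat_mul_rdist)

lemma a_inv_R: "M \<in> Am \<Longrightarrow> a_inv RR M = (\<lambda>i j. - M i j)"
proof -
  interpret ring RR by (rule ring_R)
  assume "M \<in> Am"
  then show ?thesis by (intro minus_equality) (auto simp: neg_closed)
qed

abbreviation madd :: "(nat \<Rightarrow> nat \<Rightarrow> 'a) \<Rightarrow> (nat \<Rightarrow> nat \<Rightarrow> 'a) \<Rightarrow> nat \<Rightarrow> nat \<Rightarrow> 'a"
  where "madd a b \<equiv> (\<lambda>i j. a i j + b i j)"
abbreviation mneg :: "(nat \<Rightarrow> nat \<Rightarrow> 'a) \<Rightarrow> nat \<Rightarrow> nat \<Rightarrow> 'a"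
  where "mneg a \<equiv> (\<lambda>i j. - a i j)"
abbreviation mz :: "nat \<Rightarrow> nat \<Rightarrow> 'a" where "mz \<equiv> (\<lambda>i j. 0)"
abbreviation "Sd \<equiv> Sdiag n K1 K2"
abbreviation "Jr \<equiv> (Jrad n :: (nat \<Rightarrow> nat \<Rightarrow> 'a) set)"

definition com :: "(nat \<Rightarrow> nat \<Rightarrow> 'a) \<Rightarrow> (nat \<Rightarrow> nat \<Rightarrow> 'a) \<Rightarrow> nat \<Rightarrow> nat \<Rightarrow> 'a"
  where "com s y = madd (mm s y) (mneg (mm y s))"

lemma mm_neg_l: "mm (mneg a) b = mneg (mm a b)"
  by (auto simp: mat_mul_def sum_negf intro!: ext)
lemma mm_neg_r: "mm a (mneg b) = mneg (mm a b)"
  by (auto simp: mat_mul_def sum_negf intro!: ext)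
lemma mm_z_l: "mm mz b = mz" by (auto simp: mat_mul_def intro!: ext)
lemma mm_z_r: "mm b mz = mz" by (auto simp: mat_mul_def intro!: ext)

lemmas mm_lin = mat_mul_ldist mat_mul_rdist mm_neg_l mm_neg_r mm_z_l mm_z_r

lemma J_iff: "x \<in> Jr \<longleftrightarrow> (\<forall>i j. x i j \<noteq> 0 \<longrightarrow> i < n \<and> j = n)"
  unfolding Jrad_def by blast

lemma J_sub: "Jr \<subseteq> Am"
proof
  fix x assume x: "x \<in> Jr"
  then have z: "\<not> (i < n \<and> j = n) \<Longrightarrow> x i j = 0" for i j unfolding J_iff by blast
  show "x \<in> Am" unfolding Amat_def using z K1 K2 by auto
qed

lemma S_sub: "Sd \<subseteq> Am"
  unfolding Sdiag_def by auto

lemma Jz: "x \<in> Jr \<Longrightarrow> \<not> (i < n \<and> j = n) \<Longrightarrow> x i j = 0"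
  unfolding J_iff by blast

lemma mm_J_left: "x \<in> Jr \<Longrightarrow> mm x M i j = x i n * M n j"
proof -
  assume x: "x \<in> Jr"
  have "(\<Sum>k<n. x i k * M k j) = 0" using Jz[OF x] by (intro sum.neutral) auto
  then show ?thesis by (simp add: mat_mul_Suc)
qed

lemma mm_J_right: "x \<in> Jr \<Longrightarrow> mm M x i j = (if j = n then (\<Sum>k<n. M i k * x k n) else 0)"
proof -
  assume x: "x \<in> Jr"
  show ?thesis
  proof (cases "j = n")
    case False
    then have "(\<Sum>k<n. M i k * x k j) = 0" "x n j = 0" using Jz[OF x] by (auto intro!: sum.neutral)
    then show ?thesis using False by (simp add: mat_mul_Suc)
  next
    case True
    then show ?thesis using Jz[OF x, of n n] by (simp add: mat_mul_Suc)
  qed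
qed

lemma JJ: "x \<in> Jr \<Longrightarrow> y \<in> Jr \<Longrightarrow> mm x y = mz"
  by (intro ext) (simp add: mm_J_left Jz)

lemma AJ: "M \<in> Am \<Longrightarrow> x \<in> Jr \<Longrightarrow> mm M x \<in> Jr"
proof -
  assume a: "M \<in> Am" "x \<in> Jr"
  have "mm M x i j = 0" if "\<not> (i < n \<and> j = n)" for i j
  proof (cases "j = n")
    case True
    then have "n \<le> i" using that by auto
    then have "M i k = 0" if "k < n" for k
      using Am_out[OF a(1), of i k] a(1) that \<open>n \<le> i\<close> unfolding Amat_def by (cases "i = n") auto
    then show ?thesis using True by (simp add: mm_J_right[OF a(2)])
  qed (simp add: mm_J_right[OF a(2)])
  then show ?thesis unfolding J_iff by blast
qed

lemma JA: "M \<in> Am \<Longrightarrow> x \<in> Jr \<Longrightarrow> mm x M \<in> Jr"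
proof -
  assume a: "M \<in> Am" "x \<in> Jr"
  have "mm x M i j = 0" if "\<not> (i < n \<and> j = n)" for i j
  proof (cases "i < n")
    case True
    then have "j \<noteq> n" using that by auto
    then have "M n j = 0" using a(1) unfolding Amat_def by (cases "j < n") auto
    then show ?thesis by (simp add: mm_J_left[OF a(2)])
  next
    case False
    then have "x i n = 0" using a(2) unfolding J_iff by blast
    then show ?thesis by (simp add: mm_J_left[OF a(2)])
  qed
  then show ?thesis unfolding J_iff by blast
qed

lemma J_add: "x \<in> Jr \<Longrightarrow> y \<in> Jr \<Longrightarrow> madd x y \<in> Jr"
proof -
  assume a: "x \<in> Jr" "y \<in> Jr"
  show ?thesis unfolding Jrad_def mem_Collect_eq
  proof (intro allI)
    fix i j show "(i < n \<and> j = n) \<or> x i j + y i j = 0" using Jz[OF a(1), of i j] Jz[OF a(2), of i j] by (cases "i < n \<and> j = n") auto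
  qed
qed
lemma J_neg: "x \<in> Jr \<Longrightarrow> mneg x \<in> Jr"
proof -
  assume a: "x \<in> Jr"
  show ?thesis unfolding Jrad_def mem_Collect_eq
  proof (intro allI)
    fix i j show "(i < n \<and> j = n) \<or> - x i j = 0" using Jz[OF a(1), of i j] by (cases "i < n \<and> j = n") auto
  qed
qed
lemma J_z: "mz \<in> Jr"
  unfolding J_iff by auto

lemma com_J: "s \<in> Am \<Longrightarrow> y \<in> Jr \<Longrightarrow> com s y \<in> Jr"
  unfolding com_def by (intro J_add J_neg AJ JA)

lemma S_add: "s \<in> Sd \<Longrightarrow> t \<in> Sd \<Longrightarrow> madd s t \<in> Sd"
  unfolding Sdiag_def by (auto simp: add_closed)
lemma S_neg: "s \<in> Sd \<Longrightarrow> mneg s \<in> Sd"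
  unfolding Sdiag_def by (auto simp: neg_closed)
lemma S_z: "mz \<in> Sd"
  unfolding Sdiag_def by (auto simp: zero_Am)
lemma S_mm: "s \<in> Sd \<Longrightarrow> t \<in> Sd \<Longrightarrow> mm s t \<in> Sd"
  unfolding Sdiag_def by (auto simp: mm_closed mat_mul_Suc intro!: sum.neutral)
lemma S_one: "mat_one (Suc n) \<in> Sd"
  using one_Am unfolding Sdiag_def mat_one_def by auto

lemma SJ_int: "s \<in> Sd \<Longrightarrow> s \<in> Jr \<Longrightarrow> s = mz"
proof -
  assume a: "s \<in> Sd" "s \<in> Jr"
  show "s = mz"
  proof (intro ext)
    fix i j show "s i j = 0"
      using a unfolding Sdiag_def J_iff by (cases "i < n \<and> j = n") auto
  qed
qed

definition dpart :: "(nat \<Rightarrow> nat \<Rightarrow> 'a) \<Rightarrow> nat \<Rightarrow> nat \<Rightarrow> 'a"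
  where "dpart r = (\<lambda>i j. if i < n \<and> j = n then 0 else r i j)"
definition jpart :: "(nat \<Rightarrow> nat \<Rightarrow> 'a) \<Rightarrow> nat \<Rightarrow> nat \<Rightarrow> 'a"
  where "jpart r = (\<lambda>i j. if i < n \<and> j = n then r i j else 0)"

lemma dpart_S: assumes "r \<in> Am" shows "dpart r \<in> Sd"
proof -
  have a: "\<forall>i j. n < i \<or> n < j \<longrightarrow> r i j = 0" "\<forall>i<n. \<forall>j<n. r i j \<in> K1" "\<forall>j<n. r n j = 0" "r n n \<in> K2"
    using assms unfolding Amat_def by blast+
  have "dpart r \<in> Am" unfolding Amat_def mem_Collect_eq dpart_def using a by simp
  then show ?thesis unfolding Sdiag_def dpart_def by simp
qed
lemma jpart_J: "jpart r \<in> Jr"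
  unfolding Jrad_def jpart_def by simp
lemma dj_sum: "madd (dpart r) (jpart r) = r"
  unfolding dpart_def jpart_def by (auto intro!: ext)

lemma decomp_unique:
  assumes "s \<in> Sd" "x \<in> Jr" "t \<in> Sd" "y \<in> Jr" "madd s x = madd t y"
  shows "s = t \<and> x = y"
proof -
  have e: "s i j + x i j = t i j + y i j" for i j using fun_cong[OF fun_cong[OF assms(5)]] by simp
  have 1: "madd s (mneg t) = madd y (mneg x)"
  proof (intro ext)
    fix i j have "s i j = t i j + y i j - x i j" using e[of i j] by (simp add: eq_diff_eq)
    then show "s i j + - t i j = y i j + - x i j" by simp
  qed
  have "madd s (mneg t) \<in> Sd" by (intro S_add S_neg assms)
  moreover have "madd y (mneg x) \<in> Jr" by (intro J_add J_neg assms)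
  ultimately have 2: "madd s (mneg t) = mz" using SJ_int 1 by metis
  have "s = t"
  proof (intro ext)
    fix i j have "s i j + - t i j = 0" using fun_cong[OF fun_cong[OF 2], of i j] by simp
    then show "s i j = t i j" by (simp add: add_eq_0_iff)
  qed
  moreover have "x = y"
  proof (intro ext)
    fix i j show "x i j = y i j" using e[of i j] \<open>s = t\<close> by simp
  qed
  ultimately show ?thesis by simp
qed



lemma nsub_iff: "nsubring RR H \<longleftrightarrow> H \<subseteq> Am \<and> mz \<in> H \<and> (\<forall>a\<in>H. mneg a \<in> H) \<and>
   (\<forall>a\<in>H. \<forall>b\<in>H. madd a b \<in> H \<and> mm a b \<in> H)"
proof -
  have "(\<forall>a\<in>H. a_inv RR a \<in> H) \<longleftrightarrow> (\<forall>a\<in>H. mneg a \<in> H)" if "H \<subseteq> Am"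
    by (intro ball_cong refl) (use a_inv_R that in auto)
  then show ?thesis unfolding nsubring_def by auto
qed

lemma ssum_R: "ssum RR A B = {madd a b | a b. a \<in> A \<and> b \<in> B}"
  unfolding ssum_def by simp

lemma finite_Am: "finite Am"
proof -
  let ?A = "{..n} \<times> {..n}"
  have "finite {f :: nat \<times> nat \<Rightarrow> 'a. \<forall>x. (x \<in> ?A \<longrightarrow> f x \<in> UNIV) \<and> (x \<notin> ?A \<longrightarrow> f x = 0)}"
    by (rule finite_set_of_finite_funs) auto
  then have "finite (curry ` {f :: nat \<times> nat \<Rightarrow> 'a. \<forall>x. (x \<in> ?A \<longrightarrow> f x \<in> UNIV) \<and> (x \<notin> ?A \<longrightarrow> f x = 0)})"
    by simp
  moreover have "Am \<subseteq> curry ` {f :: nat \<times> nat \<Rightarrow> 'a. \<forall>x. (x \<in> ?A \<longrightarrow> f x \<in> UNIV) \<and> (x \<notin> ?A \<longrightarrow> f x = 0)}"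
  proof
    fix M assume M: "M \<in> Am"
    show "M \<in> curry ` {f. \<forall>x. (x \<in> ?A \<longrightarrow> f x \<in> UNIV) \<and> (x \<notin> ?A \<longrightarrow> f x = 0)}"
    proof (rule image_eqI[where x = "case_prod M"])
      show "M = curry (case_prod M)" by simp
      show "case_prod M \<in> {f. \<forall>x. (x \<in> ?A \<longrightarrow> f x \<in> UNIV) \<and> (x \<notin> ?A \<longrightarrow> f x = 0)}"
        using Am_out[OF M] by (auto simp: not_le)
    qed
  qed
  ultimately show ?thesis by (rule finite_subset[rotated])
qed

lemma finite_J: "finite Jr" using finite_subset[OF J_sub finite_Am] .
lemma finite_S: "finite Sd" using finite_subset[OF S_sub finite_Am] .

lemma mm_diff_l: "mm (\<lambda>i j. a i j - b i j) c = (\<lambda>i j. mm a c i j - mm b c i j)"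
  by (auto simp: mat_mul_def sum_subtractf left_diff_distrib intro!: ext)
lemma mm_diff_r: "mm c (\<lambda>i j. a i j - b i j) = (\<lambda>i j. mm c a i j - mm c b i j)"
  by (auto simp: mat_mul_def sum_subtractf right_diff_distrib intro!: ext)
lemmas mm_lin' = mm_lin mm_diff_l mm_diff_r

lemma com_z: "com mz y = mz"
  unfolding com_def by (simp add: mm_lin')
lemma com_neg: "com (mneg s) y = mneg (com s y)"
  unfolding com_def by (simp add: mm_lin')
lemma com_add: "com (madd s t) y = madd (com s y) (com t y)"
  unfolding com_def by (simp add: mm_lin' algebra_simps)
lemma com_neg2: "com s (mneg y) = mneg (com s y)"
  unfolding com_def by (simp add: mm_lin')
lemma com_add2: "com s (madd y z) = madd (com s y) (com s z)"
  unfolding com_def by (simp add: mm_lin' algebra_simps)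

definition Tz :: "(nat \<Rightarrow> nat \<Rightarrow> 'a) \<Rightarrow> (nat \<Rightarrow> nat \<Rightarrow> 'a) set"
  where "Tz y = {madd s (com s y) | s. s \<in> Sd}"

lemma com_mult:
  assumes s: "s \<in> Sd" and t: "t \<in> Sd" and y: "y \<in> Jr"
  shows "mm (madd s (com s y)) (madd t (com t y)) = madd (mm s t) (com (mm s t) y)"
proof -
  have sA: "s \<in> Am" and tA: "t \<in> Am" using s t S_sub by auto
  have ab: "mm (com s y) (com t y) = mz" by (intro JJ com_J sA tA y)
  have sb: "mm s (com t y) = madd (mm (mm s t) y) (mneg (mm (mm s y) t))"
    unfolding com_def by (simp add: mm_lin' mat_mul_assoc)
  have at: "mm (com s y) t = madd (mm (mm s y) t) (mneg (mm y (mm s t)))"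
    unfolding com_def by (simp add: mm_lin' mat_mul_assoc)
  have "mm (madd s (com s y)) (madd t (com t y)) =
     madd (madd (mm s t) (mm s (com t y))) (madd (mm (com s y) t) (mm (com s y) (com t y)))"
    by (simp add: mat_mul_ldist mat_mul_rdist)
  also have "\<dots> = madd (mm s t) (com (mm s t) y)"
    unfolding ab sb at by (simp add: com_def)
  finally show ?thesis .
qed

lemma Tz_nsub: assumes y: "y \<in> Jr" shows "nsubring RR (Tz y)"
  unfolding nsub_iff
proof (intro conjI ballI)
  show "Tz y \<subseteq> Am" unfolding Tz_def using S_sub com_J[OF _ y] J_sub add_closed by blast
  show "mz \<in> Tz y" unfolding Tz_def by (rule CollectI, rule exI[of _ mz]) (simp add: com_z S_z)
  fix a assume "a \<in> Tz y"
  then obtain s where s: "s \<in> Sd" "a = madd s (com s y)" unfolding Tz_def by blast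
  show "mneg a \<in> Tz y" unfolding Tz_def
    by (rule CollectI, rule exI[of _ "mneg s"]) (simp add: s com_neg S_neg)
  fix b assume "b \<in> Tz y"
  then obtain t where t: "t \<in> Sd" "b = madd t (com t y)" unfolding Tz_def by blast
  show "madd a b \<in> Tz y" unfolding Tz_def
    by (rule CollectI, rule exI[of _ "madd s t"]) (simp add: s t com_add S_add algebra_simps)
  show "mm a b \<in> Tz y" unfolding Tz_def
    by (rule CollectI, rule exI[of _ "mm s t"]) (simp add: s t com_mult y S_mm)
qed

lemma Tz_unique:
  assumes y: "y \<in> Jr" and s: "s \<in> Sd" and x: "x \<in> Jr" and m: "madd s x \<in> Tz y"
  shows "x = com s y"
proof -
  obtain t where t: "t \<in> Sd" "madd s x = madd t (com t y)" using m unfolding Tz_def by blast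
  have "s = t \<and> x = com t y"
    by (rule decomp_unique[OF s x t(1) com_J[OF _ y] t(2)]) (use t S_sub in blast)
  then show ?thesis by simp
qed

lemma Tz_scompl: assumes y: "y \<in> Jr" shows "Tz y \<in> scompl RR Jr"
  unfolding scompl_def
proof (intro CollectI conjI)
  show "nsubring RR (Tz y)" by (rule Tz_nsub[OF y])
  show "ssum RR (Tz y) Jr = carrier RR"
  proof
    show "ssum RR (Tz y) Jr \<subseteq> carrier RR"
      using Tz_nsub[OF y] J_sub add_closed unfolding ssum_R nsub_iff by auto
    show "carrier RR \<subseteq> ssum RR (Tz y) Jr"
    proof
      fix r assume "r \<in> carrier RR"
      then have r: "r \<in> Am" by simp
      let ?s = "dpart r"
      have sS: "?s \<in> Sd" using dpart_S[OF r] .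
      have "r = madd (madd ?s (com ?s y)) (madd (jpart r) (mneg (com ?s y)))"
        using dj_sum[of r] by (auto simp: fun_eq_iff)
      moreover have "madd ?s (com ?s y) \<in> Tz y" unfolding Tz_def using sS by blast
      moreover have "madd (jpart r) (mneg (com ?s y)) \<in> Jr"
        using sS S_sub by (intro J_add J_neg jpart_J com_J y) auto
      ultimately show "r \<in> ssum RR (Tz y) Jr" unfolding ssum_R
        by (intro CollectI exI[of _ "madd ?s (com ?s y)"] exI[of _ "madd (jpart r) (mneg (com ?s y))"]) auto
    qed
  qed
  show "Tz y \<inter> Jr = {zero RR}"
  proof
    show "{zero RR} \<subseteq> Tz y \<inter> Jr" using Tz_nsub[OF y] J_z unfolding nsub_iff by simp
    show "Tz y \<inter> Jr \<subseteq> {zero RR}"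
    proof
      fix a assume a: "a \<in> Tz y \<inter> Jr"
      then obtain s where s: "s \<in> Sd" "a = madd s (com s y)" unfolding Tz_def by blast
      have "s = mz \<and> com s y = a"
        by (rule decomp_unique[OF s(1) com_J[OF _ y] S_z]) (use s a S_sub in auto)
      then show "a \<in> {zero RR}" using s com_z by auto
    qed
  qed
qed

definition En :: "nat \<Rightarrow> nat \<Rightarrow> 'a" where "En = (\<lambda>i j. if i = n \<and> j = n then 1 else 0)"

lemma En_S: "En \<in> Sd"
  unfolding Sdiag_def Amat_def En_def using K1 K2 by auto

lemma mm_J_En: "z \<in> Jr \<Longrightarrow> mm z En = z"
  by (intro ext) (auto simp: mm_J_left En_def Jz)

lemma mm_En_J: "z \<in> Jr \<Longrightarrow> mm En z = mz"
  by (intro ext) (auto simp: mm_J_right En_def intro!: sum.neutral)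

lemma S_facts: "s \<in> Sd \<Longrightarrow> i < n \<Longrightarrow> s i n = 0" "s \<in> Sd \<Longrightarrow> j < n \<Longrightarrow> s n j = 0"
  "s \<in> Sd \<Longrightarrow> n < i \<or> n < j \<Longrightarrow> s i j = 0"
  unfolding Sdiag_def Amat_def by blast+

lemma mm_S_En: assumes "s \<in> Sd" shows "mm s En = mm En s"
proof (intro ext)
  fix i j
  have "mm s En i j = (if i = n \<and> j = n then s n n else 0)"
    using S_facts[OF assms] by (cases "i < n") (auto simp: mat_mul_Suc En_def intro!: sum.neutral)
  moreover have "mm En s i j = (if i = n \<and> j = n then s n n else 0)"
    using S_facts[OF assms] by (cases "j < n") (auto simp: mat_mul_Suc En_def intro!: sum.neutral)
  ultimately show "mm s En i j = mm En s i j" by simp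
qed

lemma scompl_Tz:
  assumes T: "T \<in> scompl RR Jr"
  shows "\<exists>x\<in>Jr. T = Tz x"
proof -
  have Tn: "nsubring RR T" and Ts: "ssum RR T Jr = Am" and Ti: "T \<inter> Jr = {mz}"
    using T unfolding scompl_def by auto
  have TA: "T \<subseteq> Am" and Tc: "\<And>a. a \<in> T \<Longrightarrow> mneg a \<in> T"
    "\<And>a b. a \<in> T \<Longrightarrow> b \<in> T \<Longrightarrow> madd a b \<in> T"
    "\<And>a b. a \<in> T \<Longrightarrow> b \<in> T \<Longrightarrow> mm a b \<in> T"
    using Tn unfolding nsub_iff by auto
  have split: "\<exists>t z. t \<in> T \<and> z \<in> Jr \<and> r = madd t z" if "r \<in> Am" for r
    using that Ts unfolding ssum_R by blast
  obtain t x where t: "t \<in> T" and x: "x \<in> Jr" and Ee: "En = madd t x"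
    using split[of En] En_S S_sub by blast
  have teq: "t = madd En (mneg x)" using Ee by (auto simp: fun_eq_iff)
  have key: "madd s (com s x) \<in> T" if s: "s \<in> Sd" for s
  proof -
    have sA: "s \<in> Am" using s S_sub by auto
    obtain t' z where t': "t' \<in> T" and z: "z \<in> Jr" and se: "s = madd t' z"
      using split[of s] sA by blast
    have t'eq: "t' = madd s (mneg z)" using se by (auto simp: fun_eq_iff)
    have D: "madd t' (mneg (madd (mm t' t) (mneg (mm t t')))) \<in> T"
      by (intro Tc t t')
    have zE: "mm z En = z" "mm En z = mz" "mm z x = mz" "mm x z = mz"
      using mm_J_En[OF z] mm_En_J[OF z] JJ[OF z x] JJ[OF x z] by auto
    have "madd t' (mneg (madd (mm t' t) (mneg (mm t t')))) = madd s (com s x)"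
      unfolding t'eq teq com_def
      by (simp add: mm_lin' zE mm_S_En[OF s] algebra_simps)
    then show ?thesis using D by simp
  qed
  have "T = Tz x"
  proof
    show "Tz x \<subseteq> T" unfolding Tz_def using key by blast
    show "T \<subseteq> Tz x"
    proof
      fix u assume u: "u \<in> T"
      have uA: "u \<in> Am" using u TA by auto
      let ?s = "dpart u"
      have sS: "?s \<in> Sd" by (rule dpart_S[OF uA])
      have v: "madd ?s (com ?s x) \<in> T" by (rule key[OF sS])
      have w: "madd u (mneg (madd ?s (com ?s x))) \<in> T" by (intro Tc u v)
      have "madd u (mneg (madd ?s (com ?s x))) = madd (jpart u) (mneg (com ?s x))"
      proof (intro ext)
        fix i j
        have "u i j = dpart u i j + jpart u i j" using fun_cong[OF fun_cong[OF dj_sum[of u]], of i j] by simp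
        then show "u i j + - (dpart u i j + com (dpart u) x i j) = jpart u i j + - com (dpart u) x i j"
          by (simp add: algebra_simps)
      qed
      moreover have "madd (jpart u) (mneg (com ?s x)) \<in> Jr"
        using sS S_sub by (intro J_add J_neg jpart_J com_J x) auto
      ultimately have "madd u (mneg (madd ?s (com ?s x))) = mz" using w Ti by auto
      then have "u = madd ?s (com ?s x)"
      proof -
        assume e: "madd u (mneg (madd ?s (com ?s x))) = mz"
        show ?thesis
        proof (intro ext)
          fix i j show "u i j = dpart u i j + com (dpart u) x i j"
            using fun_cong[OF fun_cong[OF e], of i j] by (simp add: algebra_simps add_eq_0_iff2)
        qed
      qed
      then show "u \<in> Tz x" unfolding Tz_def using sS by blast
    qed
  qed
  then show ?thesis using x by blast
qed

lemma scompl_eq: "scompl RR Jr = Tz ` Jr"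
  using scompl_Tz Tz_scompl by blast

lemma card_scompl: "card (scompl RR Jr) \<le> card Jr"
  unfolding scompl_eq by (rule card_image_le[OF finite_J])




lemma ssum_nsub: assumes M: "nsubring RR M" "M \<subseteq> Sd" shows "nsubring RR (ssum RR M Jr)"
  unfolding nsub_iff ssum_R
proof (intro conjI ballI)
  have MA: "M \<subseteq> Am" and Mc: "mz \<in> M" "\<And>a. a \<in> M \<Longrightarrow> mneg a \<in> M"
    "\<And>a b. a \<in> M \<Longrightarrow> b \<in> M \<Longrightarrow> madd a b \<in> M"
    "\<And>a b. a \<in> M \<Longrightarrow> b \<in> M \<Longrightarrow> mm a b \<in> M"
    using M unfolding nsub_iff by auto
  show "{madd a b |a b. a \<in> M \<and> b \<in> Jr} \<subseteq> Am"
    using MA J_sub add_closed by blast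
  show "mz \<in> {madd a b |a b. a \<in> M \<and> b \<in> Jr}"
    by (intro CollectI exI[of _ mz]) (simp add: Mc J_z)
  fix u assume "u \<in> {madd a b |a b. a \<in> M \<and> b \<in> Jr}"
  then obtain a x where ax: "a \<in> M" "x \<in> Jr" "u = madd a x" by blast
  show "mneg u \<in> {madd a b |a b. a \<in> M \<and> b \<in> Jr}"
    by (intro CollectI exI[of _ "mneg a"] exI[of _ "mneg x"]) (simp add: ax Mc J_neg)
  fix v assume "v \<in> {madd a b |a b. a \<in> M \<and> b \<in> Jr}"
  then obtain b y where bq: "b \<in> M" "y \<in> Jr" "v = madd b y" by blast
  show "madd u v \<in> {madd a b |a b. a \<in> M \<and> b \<in> Jr}"
    by (intro CollectI exI[of _ "madd a b"] exI[of _ "madd x y"]) (simp add: ax bq Mc J_add algebra_simps)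
  have aA: "a \<in> Am" "b \<in> Am" using ax bq MA by auto
  have "mm u v = madd (mm a b) (madd (madd (mm a y) (mm x b)) (mm x y))"
    unfolding ax bq by (simp add: mm_lin' algebra_simps)
  also have "\<dots> = madd (mm a b) (madd (mm a y) (mm x b))"
    using JJ[OF ax(2) bq(2)] by simp
  finally show "mm u v \<in> {madd a b |a b. a \<in> M \<and> b \<in> Jr}"
    by (intro CollectI exI[of _ "mm a b"] exI[of _ "madd (mm a y) (mm x b)"])
      (simp add: ax bq Mc J_add AJ JA aA)
qed

lemma ssum_proper: assumes M: "M \<subset> Sd" shows "ssum RR M Jr \<noteq> Am"
proof
  assume e: "ssum RR M Jr = Am"
  obtain s where s: "s \<in> Sd" "s \<notin> M" using M by blast
  then have "s \<in> Am" using S_sub by auto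
  then obtain a x where ax: "a \<in> M" "x \<in> Jr" "s = madd a x" using e unfolding ssum_R by blast
  have "s = madd s mz" by simp
  then have "a = s \<and> x = mz" using decomp_unique[OF _ ax(2) s(1) J_z] ax M by auto
  then show False using ax s by auto
qed

lemma ssum_mem: "s \<in> M \<Longrightarrow> x \<in> Jr \<Longrightarrow> madd s x \<in> ssum RR M Jr"
  unfolding ssum_R by blast

lemma J_nonzero: assumes "1 \<le> n" shows "\<exists>x\<in>Jr. x \<noteq> mz"
proof
  let ?x = "(\<lambda>i j. if i = 0 \<and> j = n then 1 else 0) :: nat \<Rightarrow> nat \<Rightarrow> 'a"
  show "?x \<in> Jr" unfolding Jrad_def using assms by auto
  show "?x \<noteq> mz" by (auto simp: fun_eq_iff)
qed

lemma scompl_proper: assumes "1 \<le> n" "T \<in> scompl RR Jr" shows "T \<noteq> Am"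
proof
  assume "T = Am"
  then have "Jr \<subseteq> T \<inter> Jr" using J_sub by auto
  then have "Jr \<subseteq> {mz}" using assms(2) unfolding scompl_def by auto
  then show False using J_nonzero[OF assms(1)] by auto
qed

lemma centr: "centralizer_in RR Sd x = {s \<in> Sd. mm s x = mm x s}"
  unfolding centralizer_in_def by simp

lemma com_zero_iff: "com s y = mz \<longleftrightarrow> mm s y = mm y s"
  unfolding com_def by (auto simp: fun_eq_iff)

lemma com_diff2: "com s (\<lambda>i j. a i j - b i j) = (\<lambda>i j. com s a i j - com s b i j)"
  unfolding com_def by (simp add: mm_lin' algebra_simps)

lemma cover_part:
  assumes n1: "1 \<le> n"
    and MM: "\<forall>M\<in>MM. maximal_subring_of RR Sd M"
    and U: "(\<Union>x \<in> Jr - {mz}. centralizer_in RR Sd x) \<subseteq> \<Union>MM"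
  shows "is_cover RR (scompl RR Jr \<union> (\<lambda>M. ssum RR M Jr) ` MM)"
  unfolding is_cover_def
proof (rule conjI[OF ballI])
  fix H assume H: "H \<in> scompl RR Jr \<union> (\<lambda>M. ssum RR M Jr) ` MM"
  show "nsubring RR H \<and> H \<noteq> carrier RR"
  proof (cases "H \<in> scompl RR Jr")
    case True
    have "nsubring RR H" using True unfolding scompl_def by blast
    moreover have "H \<noteq> Am" by (rule scompl_proper[OF n1 True])
    ultimately show ?thesis by simp
  next
    case False
    then obtain M where M: "M \<in> MM" "H = ssum RR M Jr" using H by auto
    have "nsubring RR M" "M \<subset> Sd" using MM M(1) unfolding maximal_subring_of_def by auto
    then show ?thesis using ssum_nsub[of M] ssum_proper[of M] M(2) by auto
  qed
next
  show "\<Union> (scompl RR Jr \<union> (\<lambda>M. ssum RR M Jr) ` MM) = carrier RR"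
  proof
    show "\<Union> (scompl RR Jr \<union> (\<lambda>M. ssum RR M Jr) ` MM) \<subseteq> carrier RR"
    proof -
      have "H \<subseteq> Am" if HH: "H \<in> scompl RR Jr \<union> (\<lambda>M. ssum RR M Jr) ` MM" for H
      proof (cases "H \<in> scompl RR Jr")
        case True then show ?thesis unfolding scompl_def nsub_iff by auto
      next
        case False
        then obtain M where M: "M \<in> MM" "H = ssum RR M Jr" using HH by auto
        have "nsubring RR M" "M \<subset> Sd" using MM M(1) unfolding maximal_subring_of_def by auto
        then show ?thesis using ssum_nsub M(2) unfolding nsub_iff by auto
      qed
      then show ?thesis by auto
    qed
    show "carrier RR \<subseteq> \<Union> (scompl RR Jr \<union> (\<lambda>M. ssum RR M Jr) ` MM)"
    proof
      fix r assume "r \<in> carrier RR"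
      then have r: "r \<in> Am" by simp
      let ?s = "dpart r" and ?x = "jpart r"
      have sS: "?s \<in> Sd" by (rule dpart_S[OF r])
      have re: "r = madd ?s ?x" using dj_sum[of r] by simp
      show "r \<in> \<Union> (scompl RR Jr \<union> (\<lambda>M. ssum RR M Jr) ` MM)"
      proof (cases "?s \<in> \<Union>MM")
        case True
        then obtain M where "M \<in> MM" "?s \<in> M" by blast
        then show ?thesis using ssum_mem[of ?s M ?x] jpart_J re by auto
      next
        case False
        then have nc: "mm ?s y \<noteq> mm y ?s" if "y \<in> Jr" "y \<noteq> mz" for y
          using U that sS unfolding centr by blast
        have sA: "?s \<in> Am" using sS S_sub by auto
        have inj: "inj_on (com ?s) Jr"
        proof (rule inj_onI)
          fix y1 y2 assume y: "y1 \<in> Jr" "y2 \<in> Jr" "com ?s y1 = com ?s y2"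
          have "com ?s (madd y1 (mneg y2)) = madd (com ?s y1) (mneg (com ?s y2))"
            by (simp add: com_diff2)
          also have "\<dots> = mz" using y(3) by simp
          finally have cz: "com ?s (madd y1 (mneg y2)) = mz" .
          have yJ: "madd y1 (mneg y2) \<in> Jr" by (intro J_add J_neg y)
          have "madd y1 (mneg y2) = mz"
          proof (rule ccontr)
            assume "madd y1 (mneg y2) \<noteq> mz"
            from nc[OF yJ this] com_zero_iff[of ?s "madd y1 (mneg y2)"] cz show False by simp
          qed
          then show "y1 = y2" by (auto simp: fun_eq_iff)
        qed
        have "com ?s ` Jr = Jr" using endo_inj_surj[OF finite_J _ inj] com_J[OF sA] by blast
        then have "?x \<in> com ?s ` Jr" using jpart_J[of r] by simp
        then obtain y where y: "y \<in> Jr" "?x = com ?s y" by (rule imageE) simp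
        have "r = madd ?s (com ?s y)" using re y(2) by simp
        then have "r \<in> Tz y" unfolding Tz_def using sS by (intro CollectI exI[of _ ?s]) simp
        then show ?thesis using Tz_scompl[OF y(1)] by blast
      qed
    qed
  qed
qed




lemma card_J: "card Jr = card (UNIV :: 'a set) ^ n"
proof -
  let ?P = "PiE {..<n} (\<lambda>_. UNIV :: 'a set)"
  define g where "g = (\<lambda>v. (\<lambda>i j. if i < n \<and> j = n then v i else 0) :: nat \<Rightarrow> nat \<Rightarrow> 'a)"
  have inj: "inj_on g ?P"
  proof (rule inj_onI)
    fix v w assume v: "v \<in> ?P" and w: "w \<in> ?P" and e: "g v = g w"
    have vw: "v i = w i" if "i \<in> {..<n}" for i using fun_cong[OF fun_cong[OF e], of i n] that by (simp add: g_def)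
    show "v = w" by (rule PiE_ext[OF v w vw])
  qed
  have img: "g ` ?P = Jr"
  proof
    show "g ` ?P \<subseteq> Jr"
    proof (rule image_subsetI)
      fix v show "g v \<in> Jr" unfolding Jrad_def g_def by simp
    qed
    show "Jr \<subseteq> g ` ?P"
    proof
      fix x assume x: "x \<in> Jr"
      have "x = g (restrict (\<lambda>i. x i n) {..<n})"
      proof (intro ext)
        fix i j show "x i j = g (restrict (\<lambda>i. x i n) {..<n}) i j"
          using Jz[OF x, of i j] by (cases "i < n \<and> j = n") (auto simp: g_def)
      qed
      moreover have "restrict (\<lambda>i. x i n) {..<n} \<in> ?P" by (simp add: PiE_iff)
      ultimately show "x \<in> g ` ?P" by blast
    qed
  qed
  have "card Jr = card ?P" using card_image[OF inj] img by simp
  also have "\<dots> = card (UNIV :: 'a set) ^ n" by (simp add: card_PiE)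
  finally show ?thesis .
qed

definition smul :: "'a \<Rightarrow> (nat \<Rightarrow> nat \<Rightarrow> 'a) \<Rightarrow> nat \<Rightarrow> nat \<Rightarrow> 'a"
  where "smul c v = (\<lambda>i j. c * v i j)"

definition orb :: "(nat \<Rightarrow> nat \<Rightarrow> 'a) \<Rightarrow> (nat \<Rightarrow> nat \<Rightarrow> 'a) set"
  where "orb v = (\<lambda>c. smul c v) ` (UNIV - {0})"

lemma smul_J: "v \<in> Jr \<Longrightarrow> smul c v \<in> Jr"
  unfolding Jrad_def smul_def by auto

lemma smul_nz: "v \<noteq> mz \<Longrightarrow> c \<noteq> 0 \<Longrightarrow> smul c v \<noteq> mz"
  unfolding smul_def by (auto simp: fun_eq_iff)

lemma orb_card: assumes "v \<noteq> mz" shows "card (orb v) = card (UNIV :: 'a set) - 1"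
proof -
  obtain i j where ij: "v i j \<noteq> 0" using assms by (auto simp: fun_eq_iff)
  have "inj_on (\<lambda>c. smul c v) (UNIV - {0})"
  proof (rule inj_onI)
    fix c d assume "smul c v = smul d v"
    then have "c * v i j = d * v i j" unfolding smul_def by (metis)
    then show "c = d" using ij by simp
  qed
  then have "card (orb v) = card (UNIV - {0 :: 'a})" unfolding orb_def by (rule card_image)
  also have "\<dots> = card (UNIV :: 'a set) - 1" by (simp add: card_Diff_singleton)
  finally show ?thesis .
qed

lemma orb_self: "v \<in> orb v"
  unfolding orb_def by (rule image_eqI[of _ _ 1]) (auto simp: smul_def)

lemma orb_eq: assumes "w \<in> orb v" shows "orb w = orb v"
proof -
  obtain c where c: "c \<noteq> 0" "w = smul c v" using assms unfolding orb_def by auto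
  show ?thesis
  proof
    show "orb w \<subseteq> orb v" unfolding orb_def c(2)
      by (auto simp: smul_def c(1) mult.assoc[symmetric] intro!: image_eqI[where x = "_ * c"])
    show "orb v \<subseteq> orb w" unfolding orb_def c(2)
    proof
      fix u assume "u \<in> (\<lambda>d. smul d v) ` (UNIV - {0})"
      then obtain d where d: "d \<noteq> 0" "u = smul d v" by auto
      have "u = smul (d / c) (smul c v)" using c(1) d by (auto simp: smul_def fun_eq_iff)
      then show "u \<in> (\<lambda>d. smul d (smul c v)) ` (UNIV - {0})" using c(1) d(1) by auto
    qed
  qed
qed

lemma lines_count: "(card (UNIV :: 'a set) - 1) * card (orb ` (Jr - {mz})) = card Jr - 1"
proof -
  have fin: "finite (orb ` (Jr - {mz}))" using finite_J by simp
  have U: "\<Union> (orb ` (Jr - {mz})) = Jr - {mz}"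
  proof
    show "\<Union> (orb ` (Jr - {mz})) \<subseteq> Jr - {mz}"
      unfolding orb_def using smul_J smul_nz by auto
    show "Jr - {mz} \<subseteq> \<Union> (orb ` (Jr - {mz}))" using orb_self by blast
  qed
  have "(card (UNIV :: 'a set) - 1) * card (orb ` (Jr - {mz})) = card (\<Union> (orb ` (Jr - {mz})))"
  proof (rule card_partition[OF fin])
    show "finite (\<Union> (orb ` (Jr - {mz})))" unfolding U using finite_J by simp
    show "\<And>c. c \<in> orb ` (Jr - {mz}) \<Longrightarrow> card c = card (UNIV :: 'a set) - 1" using orb_card by auto
    show "\<And>c1 c2. c1 \<in> orb ` (Jr - {mz}) \<Longrightarrow> c2 \<in> orb ` (Jr - {mz}) \<Longrightarrow> c1 \<noteq> c2 \<Longrightarrow> c1 \<inter> c2 = {}"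
      using orb_eq by blast
  qed
  also have "\<dots> = card Jr - 1" unfolding U using finite_J J_z by (simp add: card_Diff_singleton)
  finally show ?thesis .
qed

lemma mm_smul_l: "mm (smul c v) s = smul c (mm v s)"
  by (auto simp: mat_mul_def smul_def sum_distrib_left mult.assoc distrib_left intro!: ext)
lemma mm_smul_r: "mm s (smul c v) = smul c (mm s v)"
  by (auto simp: mat_mul_def smul_def sum_distrib_left mult.assoc mult.left_commute distrib_left intro!: ext)

lemma smul_inj: "c \<noteq> 0 \<Longrightarrow> smul c A = smul c B \<longleftrightarrow> A = B"
  by (auto simp: smul_def fun_eq_iff)

lemma centr_smul: assumes "c \<noteq> 0" shows "centralizer_in RR Sd (smul c v) = centralizer_in RR Sd v"
proof -
  have "mm s (smul c v) = mm (smul c v) s \<longleftrightarrow> mm s v = mm v s" for s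
    unfolding mm_smul_l mm_smul_r smul_inj[OF assms] by (rule refl)
  then show ?thesis unfolding centr by auto
qed

lemma centr_orb: "w \<in> orb v \<Longrightarrow> centralizer_in RR Sd w = centralizer_in RR Sd v"
  unfolding orb_def using centr_smul by auto

lemma centr_nsub: assumes v: "v \<in> Jr" shows "nsubring RR (centralizer_in RR Sd v)"
  unfolding nsub_iff centr
proof (intro conjI ballI)
  show "{s \<in> Sd. mm s v = mm v s} \<subseteq> Am" using S_sub by auto
  show "mz \<in> {s \<in> Sd. mm s v = mm v s}" using S_z by (simp add: mm_lin)
  fix a assume a: "a \<in> {s \<in> Sd. mm s v = mm v s}"
  show "mneg a \<in> {s \<in> Sd. mm s v = mm v s}" using a S_neg by (simp add: mm_lin)
  fix b assume b: "b \<in> {s \<in> Sd. mm s v = mm v s}"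
  show "madd a b \<in> {s \<in> Sd. mm s v = mm v s}" using a b S_add by (simp add: mm_lin)
  have "mm (mm a b) v = mm v (mm a b)" using a b by (simp add: mat_mul_assoc) (simp add: mat_mul_assoc[symmetric])
  then show "mm a b \<in> {s \<in> Sd. mm s v = mm v s}" using a b S_mm by simp
qed

lemma centr_proper: assumes v: "v \<in> Jr" "v \<noteq> mz" shows "centralizer_in RR Sd v \<subset> Sd"
proof -
  have "En \<notin> centralizer_in RR Sd v"
    using mm_J_En[OF v(1)] mm_En_J[OF v(1)] v(2) unfolding centr by auto
  then show ?thesis using En_S unfolding centr by auto
qed

lemma exists_max: assumes "nsubring RR H" "H \<subset> Sd"
  shows "\<exists>M. maximal_subring_of RR Sd M \<and> H \<subseteq> M"
proof -
  let ?P = "{M. nsubring RR M \<and> H \<subseteq> M \<and> M \<subset> Sd}"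
  have fin: "finite ?P" by (rule finite_subset[of _ "Pow Sd"]) (use finite_S in auto)
  have ne: "?P \<noteq> {}" using assms by auto
  obtain M where M: "M \<in> ?P" "\<forall>b\<in>?P. M \<le> b \<longrightarrow> M = b"
    using finite_has_maximal[OF fin ne] by blast
  have "maximal_subring_of RR Sd M"
    unfolding maximal_subring_of_def using M by auto
  then show ?thesis using M by auto
qed

lemma finite_subsets_S: "\<forall>M\<in>MM. M \<subseteq> Sd \<Longrightarrow> finite MM"
  by (rule finite_subset[of _ "Pow Sd"]) (use finite_S in auto)

lemma small_MM:
  "\<exists>MM. (\<forall>M\<in>MM. maximal_subring_of RR Sd M) \<and>
     (\<Union>x \<in> Jr - {mz}. centralizer_in RR Sd x) \<subseteq> \<Union>MM \<and> card MM * (card (UNIV :: 'a set) - 1) \<le> card Jr - 1"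
proof -
  define rep :: "(nat \<Rightarrow> nat \<Rightarrow> 'a) set \<Rightarrow> nat \<Rightarrow> nat \<Rightarrow> 'a" where "rep = (\<lambda>o'. SOME v. v \<in> o')"
  define mx where "mx = (\<lambda>o'. SOME M. maximal_subring_of RR Sd M \<and> centralizer_in RR Sd (rep o') \<subseteq> M)"
  let ?C = "orb ` (Jr - {mz})"
  have mxp: "maximal_subring_of RR Sd (mx (orb v)) \<and> centralizer_in RR Sd v \<subseteq> mx (orb v)"
    if v: "v \<in> Jr" "v \<noteq> mz" for v
  proof -
    have r: "rep (orb v) \<in> orb v" unfolding rep_def using orb_self by (metis someI)
    then have ce: "centralizer_in RR Sd (rep (orb v)) = centralizer_in RR Sd v" by (rule centr_orb)
    have "\<exists>M. maximal_subring_of RR Sd M \<and> centralizer_in RR Sd (rep (orb v)) \<subseteq> M"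
      unfolding ce by (rule exists_max[OF centr_nsub[OF v(1)] centr_proper[OF v]])
    then have "maximal_subring_of RR Sd (mx (orb v)) \<and> centralizer_in RR Sd (rep (orb v)) \<subseteq> mx (orb v)"
      unfolding mx_def by (rule someI_ex)
    then show ?thesis using ce by simp
  qed
  show ?thesis
  proof (intro exI[of _ "mx ` ?C"] conjI)
    show "\<forall>M\<in>mx ` ?C. maximal_subring_of RR Sd M" using mxp by auto
    show "(\<Union>x \<in> Jr - {mz}. centralizer_in RR Sd x) \<subseteq> \<Union> (mx ` ?C)" using mxp by blast
    have "card (mx ` ?C) \<le> card ?C" by (rule card_image_le) (use finite_J in simp)
    then have "card (mx ` ?C) * (card (UNIV :: 'a set) - 1) \<le> card ?C * (card (UNIV :: 'a set) - 1)" by simp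
    also have "\<dots> = card Jr - 1" using lines_count by (simp add: mult.commute)
    finally show "card (mx ` ?C) * (card (UNIV :: 'a set) - 1) \<le> card Jr - 1" .
  qed
qed


end


lemma orbit_partition:
  fixes act :: "'g \<Rightarrow> 'x \<Rightarrow> 'x"
  assumes X: "finite X" and G: "finite G"
    and sub: "\<And>x g. x \<in> X \<Longrightarrow> g \<in> G \<Longrightarrow> act g x \<in> X"
    and self: "\<And>x. x \<in> X \<Longrightarrow> x \<in> (\<lambda>g. act g x) ` G"
    and inj: "\<And>x. x \<in> X \<Longrightarrow> inj_on (\<lambda>g. act g x) G"
    and eq: "\<And>x y. x \<in> X \<Longrightarrow> y \<in> (\<lambda>g. act g x) ` G \<Longrightarrow> (\<lambda>g. act g y) ` G = (\<lambda>g. act g x) ` G"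
  shows "card G * card ((\<lambda>x. (\<lambda>g. act g x) ` G) ` X) = card X"
proof -
  let ?C = "(\<lambda>x. (\<lambda>g. act g x) ` G) ` X"
  have U: "\<Union> ?C = X" using sub self by blast
  have "card G * card ?C = card (\<Union> ?C)"
  proof (rule card_partition)
    show "finite ?C" using X by simp
    show "finite (\<Union> ?C)" unfolding U by (rule X)
    show "\<And>c. c \<in> ?C \<Longrightarrow> card c = card G" using inj card_image by blast
    show "\<And>c1 c2. c1 \<in> ?C \<Longrightarrow> c2 \<in> ?C \<Longrightarrow> c1 \<noteq> c2 \<Longrightarrow> c1 \<inter> c2 = {}"
    proof -
      fix c1 c2 assume c1: "c1 \<in> ?C" and c2: "c2 \<in> ?C" and ne: "c1 \<noteq> c2"
      obtain x1 where x1: "x1 \<in> X" "c1 = (\<lambda>g. act g x1) ` G" using c1 by blast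
      obtain x2 where x2: "x2 \<in> X" "c2 = (\<lambda>g. act g x2) ` G" using c2 by blast
      show "c1 \<inter> c2 = {}"
      proof (rule ccontr)
        assume "c1 \<inter> c2 \<noteq> {}"
        then obtain z where z: "z \<in> c1" "z \<in> c2" by blast
        have "c1 = (\<lambda>g. act g z) ` G" using eq[OF x1(1)] z(1) x1(2) by simp
        moreover have "c2 = (\<lambda>g. act g z) ` G" using eq[OF x2(1)] z(2) x2(2) by simp
        ultimately show False using ne by simp
      qed
    qed
  qed
  then show ?thesis unfolding U .
qed

lemma aux: "1 \<le> (a::nat) \<Longrightarrow> 1 \<le> b \<Longrightarrow> a * b - 1 = a * (b - 1) + (a - 1)"
  by (cases a; cases b) auto
lemma pow_minus_one_dvd:
  fixes p :: nat
  assumes p: "2 \<le> p" and d: "1 \<le> d"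
  shows "p ^ d - 1 dvd p ^ k - 1 \<Longrightarrow> d dvd k"
proof (induction k rule: less_induct)
  case (less k)
  show ?case
  proof (cases "k < d")
    case True
    show ?thesis
    proof (cases "k = 0")
      case False
      have "p ^ k < p ^ d" using True p by (intro power_strict_increasing) auto
      moreover have "1 < p ^ k" using False p by (intro one_less_power) auto
      ultimately have "0 < p ^ k - 1" "p ^ k - 1 < p ^ d - 1" by auto
      then have False using less.prems by (auto dest: dvd_imp_le)
      then show ?thesis ..
    qed simp
  next
    case False
    have pk: "1 \<le> p ^ (k - d)" using p by simp
    have pd: "1 \<le> p ^ d" using p by simp
    have "p ^ k = p ^ (k - d) * p ^ d" using False by (simp add: power_add[symmetric])
    then have "p ^ k - 1 = p ^ (k - d) * (p ^ d - 1) + (p ^ (k - d) - 1)"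
      using aux[OF pk pd] by simp
    then have "p ^ d - 1 dvd p ^ (k - d) * (p ^ d - 1) + (p ^ (k - d) - 1)" using less.prems by simp
    then have "p ^ d - 1 dvd p ^ (k - d) - 1" by (simp add: dvd_add_right_iff)
    then have "d dvd k - d" using less.IH[of "k - d"] d False by simp
    then have "d dvd (k - d) + d" by simp
    then show ?thesis using False by simp
  qed
qed

inductive_set LL :: "'a::field set \<Rightarrow> 'a set \<Rightarrow> 'a set" for K1 K2 where
  LL0: "0 \<in> LL K1 K2"
| LLs: "a \<in> K1 \<Longrightarrow> b \<in> K2 \<Longrightarrow> l \<in> LL K1 K2 \<Longrightarrow> a * b + l \<in> LL K1 K2"

context
  fixes K1 K2 :: "'a::field set"
  assumes sf1: "is_subfield K1" and sf2: "is_subfield K2"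
begin

lemma LL_add: "l \<in> LL K1 K2 \<Longrightarrow> l' \<in> LL K1 K2 \<Longrightarrow> l + l' \<in> LL K1 K2"
  by (induction l rule: LL.induct) (auto simp: add.assoc intro: LL.intros)

lemma LL_neg: "l \<in> LL K1 K2 \<Longrightarrow> - l \<in> LL K1 K2"
proof (induction l rule: LL.induct)
  case LL0 then show ?case by (simp add: LL.intros)
next
  case (LLs a b l)
  have "- a \<in> K1" using LLs sf1 by (simp add: is_subfield_def)
  then have "(- a) * b + (- l) \<in> LL K1 K2" using LLs by (intro LL.LLs) auto
  then show ?case by simp
qed

lemma LL_K1: assumes "a \<in> K1" shows "a \<in> LL K1 K2"
proof -
  have "a * 1 + 0 \<in> LL K1 K2" by (rule LL.LLs[OF assms]) (use sf2 in \<open>auto simp: is_subfield_def intro: LL.LL0\<close>)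
  then show ?thesis by simp
qed
lemma LL_K2: assumes "b \<in> K2" shows "b \<in> LL K1 K2"
proof -
  have "1 * b + 0 \<in> LL K1 K2" by (rule LL.LLs[OF _ assms]) (use sf1 in \<open>auto simp: is_subfield_def intro: LL.LL0\<close>)
  then show ?thesis by simp
qed

lemma LL_mult1: "l \<in> LL K1 K2 \<Longrightarrow> a \<in> K1 \<Longrightarrow> b \<in> K2 \<Longrightarrow> a * b * l \<in> LL K1 K2"
proof (induction l rule: LL.induct)
  case LL0 then show ?case by (simp add: LL.intros)
next
  case (LLs a' b' l)
  have "a * b * (a' * b' + l) = (a * a') * (b * b') + a * b * l" by (simp add: algebra_simps)
  have "a * a' \<in> K1" "b * b' \<in> K2" using LLs sf1 sf2 by (auto simp: is_subfield_def)
  then have "(a * a') * (b * b') + a * b * l \<in> LL K1 K2" using LLs by (intro LL.LLs) auto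
  then show ?case using \<open>a * b * (a' * b' + l) = _\<close> by simp
qed

lemma LL_mult: "l \<in> LL K1 K2 \<Longrightarrow> l' \<in> LL K1 K2 \<Longrightarrow> l * l' \<in> LL K1 K2"
proof (induction l rule: LL.induct)
  case LL0 then show ?case by (simp add: LL.intros)
next
  case (LLs a b l)
  have "(a * b + l) * l' = a * b * l' + l * l'" by (simp add: algebra_simps)
  then show ?case using LLs LL_mult1 LL_add by auto
qed

end

lemma compositum:
  fixes K1 K2 :: "'a::{field,finite} set" and p d1 d2 :: nat
  assumes sf1: "is_subfield K1" and sf2: "is_subfield K2" and p: "prime p"
    and d1: "1 \<le> d1" and d2: "1 \<le> d2"
    and c1: "card K1 = p ^ d1" and c2: "card K2 = p ^ d2"
    and cU: "card (UNIV :: 'a set) = p ^ lcm d1 d2"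
  shows "LL K1 K2 = UNIV"
proof -
  let ?L = "LL K1 K2"
  have p2: "2 \<le> p" using p by (simp add: prime_ge_2_nat)
  have fin: "finite ?L" by simp
  have L01: "0 \<in> ?L" "1 \<in> ?L" using LL_K1[OF sf1 sf2, of 1] LL.LL0 sf1 by (auto simp: is_subfield_def)
  have "card ?L * card ((\<lambda>x. (\<lambda>l. l + x) ` ?L) ` UNIV) = card (UNIV :: 'a set)"
  proof (rule orbit_partition)
    show "\<And>x. x \<in> UNIV \<Longrightarrow> x \<in> (\<lambda>l. l + x) ` ?L" by (rule image_eqI[of _ _ 0]) (auto simp: L01)
    show "\<And>x. x \<in> UNIV \<Longrightarrow> inj_on (\<lambda>l. l + x) ?L" by (simp add: inj_on_def)
    show "\<And>x y. x \<in> UNIV \<Longrightarrow> y \<in> (\<lambda>l. l + x) ` ?L \<Longrightarrow> (\<lambda>l. l + y) ` ?L = (\<lambda>l. l + x) ` ?L"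
    proof -
      fix x y assume "y \<in> (\<lambda>l. l + x) ` ?L"
      then obtain l0 where l0: "l0 \<in> ?L" "y = l0 + x" by blast
      show "(\<lambda>l. l + y) ` ?L = (\<lambda>l. l + x) ` ?L"
      proof
        show "(\<lambda>l. l + y) ` ?L \<subseteq> (\<lambda>l. l + x) ` ?L"
        proof
          fix z assume "z \<in> (\<lambda>l. l + y) ` ?L"
          then obtain l where l: "l \<in> ?L" "z = l + y" by blast
          have "z = (l + l0) + x" using l l0 by (simp add: add.assoc)
          then show "z \<in> (\<lambda>l. l + x) ` ?L" using LL_add[OF sf1 sf2 l(1) l0(1)] by blast
        qed
        show "(\<lambda>l. l + x) ` ?L \<subseteq> (\<lambda>l. l + y) ` ?L"
        proof
          fix z assume "z \<in> (\<lambda>l. l + x) ` ?L"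
          then obtain l where l: "l \<in> ?L" "z = l + x" by blast
          have "z = (l + - l0) + y" using l l0 by (simp add: algebra_simps)
          then show "z \<in> (\<lambda>l. l + y) ` ?L" using LL_add[OF sf1 sf2 l(1) LL_neg[OF sf1 sf2 l0(1)]] by blast
        qed
      qed
    qed
  qed auto
  then have "card ?L dvd p ^ lcm d1 d2" unfolding cU by (rule dvdI[OF sym])
  then obtain k where k: "k \<le> lcm d1 d2" "card ?L = p ^ k" using divides_primepow_nat[OF p] by blast
  have mo: "card K - 1 dvd card ?L - 1" if sfK: "is_subfield K" and KL: "K \<subseteq> ?L" for K
  proof -
    have finK: "finite K" by simp
    have "card (K - {0}) * card ((\<lambda>x. (\<lambda>g. g * x) ` (K - {0})) ` (?L - {0})) = card (?L - {0})"
    proof (rule orbit_partition)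
      show "\<And>x g. x \<in> ?L - {0} \<Longrightarrow> g \<in> K - {0} \<Longrightarrow> g * x \<in> ?L - {0}"
        using KL LL_mult[OF sf1 sf2] by auto
      show "\<And>x. x \<in> ?L - {0} \<Longrightarrow> x \<in> (\<lambda>g. g * x) ` (K - {0})"
        by (rule image_eqI[of _ _ 1]) (use sfK in \<open>auto simp: is_subfield_def\<close>)
      show "\<And>x. x \<in> ?L - {0} \<Longrightarrow> inj_on (\<lambda>g. g * x) (K - {0})" by (auto simp: inj_on_def)
      show "(\<lambda>g. g * y) ` (K - {0}) = (\<lambda>g. g * x) ` (K - {0})"
        if xy: "x \<in> ?L - {0}" "y \<in> (\<lambda>g. g * x) ` (K - {0})" for x y
      proof -
        obtain g0 where g0: "g0 \<in> K - {0}" "y = g0 * x" using xy by blast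
        have g0i: "inverse g0 \<in> K" using g0 sfK by (simp add: is_subfield_def)
        have Km: "\<And>a b. a \<in> K \<Longrightarrow> b \<in> K \<Longrightarrow> a * b \<in> K" using sfK by (simp add: is_subfield_def)
        show ?thesis
        proof
          show "(\<lambda>g. g * y) ` (K - {0}) \<subseteq> (\<lambda>g. g * x) ` (K - {0})"
          proof
            fix z assume "z \<in> (\<lambda>g. g * y) ` (K - {0})"
            then obtain g where g: "g \<in> K - {0}" "z = g * y" by blast
            have "z = (g * g0) * x" using g g0 by (simp add: mult.assoc)
            then show "z \<in> (\<lambda>g. g * x) ` (K - {0})" by (rule image_eqI) (use g g0 Km in auto)
          qed
          show "(\<lambda>g. g * x) ` (K - {0}) \<subseteq> (\<lambda>g. g * y) ` (K - {0})"
          proof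
            fix z assume "z \<in> (\<lambda>g. g * x) ` (K - {0})"
            then obtain g where g: "g \<in> K - {0}" "z = g * x" by blast
            have "z = (g * inverse g0) * y" using g g0 by (simp add: field_simps)
            then show "z \<in> (\<lambda>g. g * y) ` (K - {0})" by (rule image_eqI) (use g g0 g0i Km in auto)
          qed
        qed
      qed
    qed auto
    moreover have "card (K - {0}) = card K - 1" using sfK by (simp add: is_subfield_def card_Diff_singleton)
    moreover have "card (?L - {0}) = card ?L - 1" using L01 by (simp add: card_Diff_singleton)
    ultimately show ?thesis by (metis dvdI)
  qed
  have "K1 \<subseteq> ?L" "K2 \<subseteq> ?L" using LL_K1[OF sf1 sf2] LL_K2[OF sf1 sf2] by auto
  then have "p ^ d1 - 1 dvd p ^ k - 1" "p ^ d2 - 1 dvd p ^ k - 1"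
    using mo[OF sf1] mo[OF sf2] c1 c2 k(2) by auto
  then have "d1 dvd k" "d2 dvd k" using pow_minus_one_dvd[OF p2] d1 d2 by auto
  then have "lcm d1 d2 dvd k" by simp
  moreover have "k \<noteq> 0"
  proof
    assume "k = 0"
    then have "card ?L = 1" using k by simp
    moreover have "{0, 1} \<subseteq> ?L" using L01 by auto
    moreover have "card {0::'a, 1} \<le> card ?L" by (rule card_mono[OF fin]) (use L01 in auto)
    ultimately show False by simp
  qed
  ultimately have "lcm d1 d2 \<le> k" by (intro dvd_imp_le) auto
  then have "k = lcm d1 d2" using k(1) by simp
  then have "card ?L = card (UNIV :: 'a set)" using k cU by simp
  then show ?thesis by (intro card_subset_eq) auto
qed

context AR begin



definition single :: "nat \<Rightarrow> 'a \<Rightarrow> nat \<Rightarrow> nat \<Rightarrow> 'a"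
  where "single i c = (\<lambda>k l. if k = i \<and> l = n then c else 0)"

lemma J_min:
  assumes LU: "LL K1 K2 = UNIV"
    and I: "I \<subseteq> Jr" "mz \<in> I" "\<And>a b. a \<in> I \<Longrightarrow> b \<in> I \<Longrightarrow> madd a b \<in> I"
    "\<And>s x. s \<in> Sd \<Longrightarrow> x \<in> I \<Longrightarrow> mm s x \<in> I"
    "\<And>s x. s \<in> Sd \<Longrightarrow> x \<in> I \<Longrightarrow> mm x s \<in> I"
    and d: "d \<in> I" "d \<noteq> mz"
  shows "Jr \<subseteq> I"
proof -
  have dJ: "d \<in> Jr" using d I(1) by auto
  obtain j where j: "j < n" "d j n \<noteq> 0"
  proof -
    obtain a b where "d a b \<noteq> 0" using d(2) by (auto simp: fun_eq_iff)
    then show ?thesis using that Jz[OF dJ, of a b] by auto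
  qed
  have basic: "single i (a * d j n * b) \<in> I" if i: "i < n" and a: "a \<in> K1" and b: "b \<in> K2" for i a b
  proof -
    define E :: "nat \<Rightarrow> nat \<Rightarrow> 'a" where "E = (\<lambda>k l. if k = i \<and> l = j then a else 0)"
    define F :: "nat \<Rightarrow> nat \<Rightarrow> 'a" where "F = (\<lambda>k l. if k = n \<and> l = n then b else 0)"
    have ES: "E \<in> Sd" unfolding Sdiag_def Amat_def E_def using i j a K1 K2 by auto
    have FS: "F \<in> Sd" unfolding Sdiag_def Amat_def F_def using b K1 K2 by auto
    have e1: "mm E d = (\<lambda>k l. if k = i then a * d j l else 0)"
    proof (intro ext)
      fix k l
      have "mm E d k l = (\<Sum>m<Suc n. if m = j then (if k = i then a * d j l else 0) else 0)"
        unfolding mat_mul_def E_def by (intro sum.cong) auto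
      also have "\<dots> = (if k = i then a * d j l else 0)" using j by (simp add: sum.delta)
      finally show "mm E d k l = (if k = i then a * d j l else 0)" .
    qed
    have e2: "mm (mm E d) F = single i (a * d j n * b)"
    proof (intro ext)
      fix k l
      have "mm (mm E d) F k l = (\<Sum>m<Suc n. if m = n then (if k = i \<and> l = n then a * d j n * b else 0) else 0)"
        unfolding e1 unfolding mat_mul_def F_def by (intro sum.cong) auto
      also have "\<dots> = single i (a * d j n * b) k l" by (simp add: sum.delta single_def)
      finally show "mm (mm E d) F k l = single i (a * d j n * b) k l" .
    qed
    show ?thesis unfolding e2[symmetric] by (intro I(4) I(5) ES FS d(1))
  qed
  have gen: "single i (c * d j n) \<in> I" if i: "i < n" and c: "c \<in> LL K1 K2" for i c
    using c
  proof (induction c rule: LL.induct)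
    case LL0 then show ?case using I(2) by (simp add: single_def)
  next
    case (LLs a b l)
    have "single i ((a * b + l) * d j n) = madd (single i (a * d j n * b)) (single i (l * d j n))"
      by (intro ext) (auto simp: single_def algebra_simps)
    then show ?case using I(3) basic[OF i LLs(1) LLs(2)] LLs(4) by simp
  qed
  have all: "single i w \<in> I" if i: "i < n" for i w
  proof -
    have "w / d j n \<in> LL K1 K2" using LU by simp
    then have "single i ((w / d j n) * d j n) \<in> I" by (rule gen[OF i])
    moreover have "(w / d j n) * d j n = w" using j(2) by simp
    ultimately show ?thesis by simp
  qed
  show ?thesis
  proof
    fix x assume x: "x \<in> Jr"
    define P :: "nat \<Rightarrow> nat \<Rightarrow> nat \<Rightarrow> 'a" where "P = (\<lambda>m k l. if k < m \<and> l = n then x k n else 0)"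
    have "m \<le> n \<Longrightarrow> P m \<in> I" for m
    proof (induction m)
      case 0 then show ?case using I(2) by (simp add: P_def)
    next
      case (Suc m)
      have "P (Suc m) = madd (P m) (single m (x m n))"
        by (auto simp: P_def single_def fun_eq_iff)
      then show ?case using I(3) Suc all[of m "x m n"] by simp
    qed
    moreover have "P n = x" using Jz[OF x] by (auto simp: P_def fun_eq_iff)
    ultimately show "x \<in> I" by auto
  qed
qed

definition maxR :: "(nat \<Rightarrow> nat \<Rightarrow> 'a) set \<Rightarrow> bool" where
  "maxR H \<longleftrightarrow> nsubring RR H \<and> H \<noteq> Am \<and> (\<forall>H'. nsubring RR H' \<and> H \<subseteq> H' \<and> H' \<noteq> Am \<longrightarrow> H' = H)"

lemma exists_maxR: assumes "nsubring RR H" "H \<noteq> Am" shows "\<exists>M. maxR M \<and> H \<subseteq> M"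
proof -
  let ?P = "{M. nsubring RR M \<and> H \<subseteq> M \<and> M \<noteq> Am}"
  have fin: "finite ?P"
    by (rule finite_subset[of _ "Pow Am"]) (use finite_Am in \<open>auto simp: nsub_iff\<close>)
  have ne: "?P \<noteq> {}" using assms by auto
  obtain M where M: "M \<in> ?P" "\<forall>b\<in>?P. M \<le> b \<longrightarrow> M = b"
    using finite_has_maximal[OF fin ne] by blast
  have "maxR M" unfolding maxR_def using M by auto
  then show ?thesis using M by auto
qed

lemma ssum_nsub_gen: assumes M: "nsubring RR M" shows "nsubring RR (ssum RR M Jr)"
  unfolding nsub_iff ssum_R
proof (intro conjI ballI)
  have MA: "M \<subseteq> Am" and Mc: "mz \<in> M" "\<And>a. a \<in> M \<Longrightarrow> mneg a \<in> M"
    "\<And>a b. a \<in> M \<Longrightarrow> b \<in> M \<Longrightarrow> madd a b \<in> M"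
    "\<And>a b. a \<in> M \<Longrightarrow> b \<in> M \<Longrightarrow> mm a b \<in> M"
    using M unfolding nsub_iff by auto
  show "{madd a b |a b. a \<in> M \<and> b \<in> Jr} \<subseteq> Am"
    using MA J_sub add_closed by blast
  show "mz \<in> {madd a b |a b. a \<in> M \<and> b \<in> Jr}"
    by (intro CollectI exI[of _ mz]) (simp add: Mc J_z)
  fix u assume "u \<in> {madd a b |a b. a \<in> M \<and> b \<in> Jr}"
  then obtain a x where ax: "a \<in> M" "x \<in> Jr" "u = madd a x" by blast
  show "mneg u \<in> {madd a b |a b. a \<in> M \<and> b \<in> Jr}"
    by (intro CollectI exI[of _ "mneg a"] exI[of _ "mneg x"]) (simp add: ax Mc J_neg)
  fix v assume "v \<in> {madd a b |a b. a \<in> M \<and> b \<in> Jr}"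
  then obtain b y where bq: "b \<in> M" "y \<in> Jr" "v = madd b y" by blast
  show "madd u v \<in> {madd a b |a b. a \<in> M \<and> b \<in> Jr}"
    by (intro CollectI exI[of _ "madd a b"] exI[of _ "madd x y"]) (simp add: ax bq Mc J_add algebra_simps)
  have aA: "a \<in> Am" "b \<in> Am" using ax bq MA by auto
  have "mm u v = madd (mm a b) (madd (madd (mm a y) (mm x b)) (mm x y))"
    unfolding ax bq by (simp add: mm_lin' algebra_simps)
  also have "\<dots> = madd (mm a b) (madd (mm a y) (mm x b))"
    using JJ[OF ax(2) bq(2)] by simp
  finally show "mm u v \<in> {madd a b |a b. a \<in> M \<and> b \<in> Jr}"
    by (intro CollectI exI[of _ "mm a b"] exI[of _ "madd (mm a y) (mm x b)"])
      (simp add: ax bq Mc J_add AJ JA aA)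
qed

lemma maxR_noJ:
  assumes LU: "LL K1 K2 = UNIV" and H: "maxR H" and nJ: "\<not> Jr \<subseteq> H"
  shows "H \<inter> Jr = {mz} \<and> ssum RR H Jr = Am"
proof -
  have Hn: "nsubring RR H" and Hp: "H \<noteq> Am" and Hm: "\<And>H'. nsubring RR H' \<Longrightarrow> H \<subseteq> H' \<Longrightarrow> H' \<noteq> Am \<Longrightarrow> H' = H"
    using H unfolding maxR_def by auto
  have HA: "H \<subseteq> Am" and Hc: "mz \<in> H" "\<And>a. a \<in> H \<Longrightarrow> mneg a \<in> H"
    "\<And>a b. a \<in> H \<Longrightarrow> b \<in> H \<Longrightarrow> madd a b \<in> H"
    "\<And>a b. a \<in> H \<Longrightarrow> b \<in> H \<Longrightarrow> mm a b \<in> H"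
    using Hn unfolding nsub_iff by auto
  have sub: "H \<subseteq> ssum RR H Jr"
  proof
    fix h assume "h \<in> H" then show "h \<in> ssum RR H Jr" unfolding ssum_R
      by (intro CollectI exI[of _ h] exI[of _ mz]) (simp add: J_z)
  qed
  have full: "ssum RR H Jr = Am"
  proof (rule ccontr)
    assume "ssum RR H Jr \<noteq> Am"
    then have "ssum RR H Jr = H" using Hm[OF ssum_nsub_gen[OF Hn] sub] by simp
    moreover have "Jr \<subseteq> ssum RR H Jr"
    proof
      fix x assume "x \<in> Jr" then show "x \<in> ssum RR H Jr" unfolding ssum_R
        by (intro CollectI exI[of _ mz] exI[of _ x]) (simp add: Hc)
    qed
    ultimately show False using nJ by simp
  qed
  have split: "\<exists>h y. h \<in> H \<and> y \<in> Jr \<and> r = madd h y" if "r \<in> Am" for r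
    using that full unfolding ssum_R by blast
  have "Jr \<subseteq> H \<inter> Jr" if nz: "d \<in> H \<inter> Jr" "d \<noteq> mz" for d
  proof (rule J_min[OF LU _ _ _ _ _ nz])
    show "H \<inter> Jr \<subseteq> Jr" by simp
    show "mz \<in> H \<inter> Jr" using Hc J_z by simp
    show "\<And>a b. a \<in> H \<inter> Jr \<Longrightarrow> b \<in> H \<inter> Jr \<Longrightarrow> madd a b \<in> H \<inter> Jr" using Hc J_add by simp
    show "mm s x \<in> H \<inter> Jr" if s: "s \<in> Sd" and x: "x \<in> H \<inter> Jr" for s x
    proof -
      obtain h y where hy: "h \<in> H" "y \<in> Jr" "s = madd h y" using split[of s] s S_sub by blast
      have "mm s x = madd (mm h x) (mm y x)" unfolding hy by (simp add: mm_lin)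
      also have "\<dots> = mm h x" using JJ[OF hy(2)] x by simp
      finally show ?thesis using Hc(4)[OF hy(1)] x AJ[OF _ ] HA hy(1) by auto
    qed
    show "mm x s \<in> H \<inter> Jr" if s: "s \<in> Sd" and x: "x \<in> H \<inter> Jr" for s x
    proof -
      obtain h y where hy: "h \<in> H" "y \<in> Jr" "s = madd h y" using split[of s] s S_sub by blast
      have "mm x s = madd (mm x h) (mm x y)" unfolding hy by (simp add: mm_lin)
      also have "\<dots> = mm x h" using JJ[OF _ hy(2)] x by simp
      finally show ?thesis using Hc(4)[OF _ hy(1)] x JA[OF _ ] HA hy(1) by auto
    qed
  qed
  then have "H \<inter> Jr \<subseteq> {mz}" using nJ by blast
  then have "H \<inter> Jr = {mz}" using Hc J_z by auto
  then show ?thesis using full by simp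
qed

lemma S_nsub: "nsubring RR Sd"
  unfolding nsub_iff using S_sub S_z S_neg S_add S_mm by auto

lemma maxR_J:
  assumes H: "maxR H" and J: "Jr \<subseteq> H"
  shows "maximal_subring_of RR Sd (H \<inter> Sd)"
proof -
  have Hn: "nsubring RR H" and Hp: "H \<noteq> Am" and Hm: "\<And>H'. nsubring RR H' \<Longrightarrow> H \<subseteq> H' \<Longrightarrow> H' \<noteq> Am \<Longrightarrow> H' = H"
    using H unfolding maxR_def by auto
  have HA: "H \<subseteq> Am" and Hc: "mz \<in> H" "\<And>a. a \<in> H \<Longrightarrow> mneg a \<in> H"
    "\<And>a b. a \<in> H \<Longrightarrow> b \<in> H \<Longrightarrow> madd a b \<in> H"
    "\<And>a b. a \<in> H \<Longrightarrow> b \<in> H \<Longrightarrow> mm a b \<in> H"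
    using Hn unfolding nsub_iff by auto
  have n1: "nsubring RR (H \<inter> Sd)"
    using Hn S_nsub unfolding nsub_iff by auto
  have dp: "dpart h \<in> H \<inter> Sd" if h: "h \<in> H" for h
  proof -
    have "dpart h = madd h (mneg (jpart h))" by (auto simp: dpart_def jpart_def fun_eq_iff)
    moreover have "madd h (mneg (jpart h)) \<in> H" by (rule Hc(3)[OF h Hc(2)]) (use J jpart_J in blast)
    ultimately have "dpart h \<in> H" by simp
    then show ?thesis using dpart_S h HA by auto
  qed
  have ps: "H \<inter> Sd \<subset> Sd"
  proof -
    have "\<not> Sd \<subseteq> H"
    proof
      assume SH: "Sd \<subseteq> H"
      have "Am \<subseteq> H"
      proof
        fix r assume rA: "r \<in> Am"
        have "madd (dpart r) (jpart r) \<in> H" by (rule Hc(3)) (use SH J dpart_S[OF rA] jpart_J in auto)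
        then show "r \<in> H" using dj_sum by simp
      qed
      then show False using Hp HA by auto
    qed
    then show ?thesis by auto
  qed
  show ?thesis unfolding maximal_subring_of_def
  proof (intro conjI allI impI n1 ps)
    fix M' assume M': "nsubring RR M' \<and> H \<inter> Sd \<subseteq> M' \<and> M' \<subset> Sd"
    have "H \<subseteq> ssum RR M' Jr"
    proof
      fix h assume h: "h \<in> H"
      have "h = madd (dpart h) (jpart h)" using dj_sum by simp
      moreover have "madd (dpart h) (jpart h) \<in> ssum RR M' Jr"
        by (rule ssum_mem) (use dp[OF h] M' jpart_J in auto)
      ultimately show "h \<in> ssum RR M' Jr" by simp
    qed
    then have e: "ssum RR M' Jr = H" using Hm ssum_nsub_gen ssum_proper M' by auto
    have "M' \<subseteq> H \<inter> Sd"
    proof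
      fix m assume m: "m \<in> M'"
      have "madd m mz \<in> ssum RR M' Jr" by (rule ssum_mem[OF m J_z])
      then show "m \<in> H \<inter> Sd" using e m M' by auto
    qed
    then show "M' = H \<inter> Sd" using M' by auto
  qed
qed


end


lemma sigma_le: "is_cover R C \<Longrightarrow> sigma R \<le> ecard C"
  unfolding sigma_def by (rule INF_lower) simp

lemma sigma_ge: "(\<And>C. is_cover R C \<Longrightarrow> x \<le> ecard C) \<Longrightarrow> x \<le> sigma R"
  unfolding sigma_def by (rule INF_greatest) simp

lemma sigma_attained: assumes "is_cover R C" shows "\<exists>C0. is_cover R C0 \<and> ecard C0 = sigma R"
proof -
  let ?m = "LEAST m. \<exists>C. is_cover R C \<and> ecard C = m"
  have ex: "\<exists>C. is_cover R C \<and> ecard C = ?m" by (rule LeastI_ex) (use assms in blast)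
  then obtain C0 where C0: "is_cover R C0" "ecard C0 = ?m" by blast
  have "?m \<le> sigma R"
    by (rule sigma_ge) (auto intro: Least_le)
  moreover have "sigma R \<le> ?m" using sigma_le[OF C0(1)] C0(2) by simp
  ultimately show ?thesis using C0 by (intro exI[of _ C0]) simp
qed

lemma quot_cover:
  fixes R (structure)
  assumes I: "ideal I R" and C: "is_cover R C" and sup: "\<forall>H\<in>C. I \<subseteq> H"
  shows "is_cover (R Quot I) ((\<lambda>H. a_r_coset R I ` H) ` C)"
proof -
  interpret ideal I R by (rule I)
  interpret h: ring_hom_ring R "R Quot I" "a_r_coset R I" by (rule rcos_ring_hom_ring)
  have Cn: "\<And>H. H \<in> C \<Longrightarrow> nsubring R H \<and> H \<noteq> carrier R" and Cu: "\<Union>C = carrier R"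
    using C unfolding is_cover_def by auto
  have self: "r \<in> I +> r" if "r \<in> carrier R" for r
    using that unfolding a_r_coset_def' by (intro UN_I[of \<zero>]) auto
  show ?thesis unfolding is_cover_def
  proof (intro conjI ballI)
    fix Q assume "Q \<in> (\<lambda>H. a_r_coset R I ` H) ` C"
    then obtain H where H: "H \<in> C" "Q = a_r_coset R I ` H" by blast
    have Hn: "nsubring R H" and Hp: "H \<noteq> carrier R" using Cn[OF H(1)] by auto
    have HA: "H \<subseteq> carrier R" and Hz: "\<zero> \<in> H" and Hi: "\<And>a. a \<in> H \<Longrightarrow> \<ominus> a \<in> H"
      and Ha: "\<And>a b. a \<in> H \<Longrightarrow> b \<in> H \<Longrightarrow> a \<oplus> b \<in> H"
      and Hm: "\<And>a b. a \<in> H \<Longrightarrow> b \<in> H \<Longrightarrow> a \<otimes> b \<in> H"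
      using Hn unfolding nsubring_def by auto
    show "nsubring (R Quot I) Q" unfolding nsubring_def H(2)
    proof (intro conjI ballI)
      show "a_r_coset R I ` H \<subseteq> carrier (R Quot I)" using HA h.hom_closed by auto
      show "\<zero>\<^bsub>R Quot I\<^esub> \<in> a_r_coset R I ` H"
      proof (rule image_eqI)
        show "\<zero>\<^bsub>R Quot I\<^esub> = I +> \<zero>" by (rule h.hom_zero[symmetric])
      qed (rule Hz)
      fix x assume "x \<in> a_r_coset R I ` H"
      then obtain a where a: "a \<in> H" "x = I +> a" by blast
      have aA: "a \<in> carrier R" using a HA by auto
      show "\<ominus>\<^bsub>R Quot I\<^esub> x \<in> a_r_coset R I ` H"
      proof (rule image_eqI)
        show "\<ominus>\<^bsub>R Quot I\<^esub> x = I +> (\<ominus> a)" unfolding a(2) by (rule h.hom_a_inv[OF aA, symmetric])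
      qed (rule Hi[OF a(1)])
      fix y assume "y \<in> a_r_coset R I ` H"
      then obtain b where b: "b \<in> H" "y = I +> b" by blast
      have bA: "b \<in> carrier R" using b HA by auto
      show "x \<oplus>\<^bsub>R Quot I\<^esub> y \<in> a_r_coset R I ` H"
      proof (rule image_eqI)
        show "x \<oplus>\<^bsub>R Quot I\<^esub> y = I +> (a \<oplus> b)" unfolding a(2) b(2) by (rule h.hom_add[OF aA bA, symmetric])
      qed (rule Ha[OF a(1) b(1)])
      show "x \<otimes>\<^bsub>R Quot I\<^esub> y \<in> a_r_coset R I ` H"
      proof (rule image_eqI)
        show "x \<otimes>\<^bsub>R Quot I\<^esub> y = I +> (a \<otimes> b)" unfolding a(2) b(2) by (rule h.hom_mult[OF aA bA, symmetric])
      qed (rule Hm[OF a(1) b(1)])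
    qed
    show "Q \<noteq> carrier (R Quot I)"
    proof
      assume e: "Q = carrier (R Quot I)"
      have "carrier R \<subseteq> H"
      proof
        fix r assume r: "r \<in> carrier R"
        then have "I +> r \<in> Q" using e h.hom_closed by simp
        then obtain h where hh: "h \<in> H" "I +> r = I +> h" using H(2) by blast
        then have "r \<in> I +> h" using self[OF r] by simp
        then obtain i where i: "i \<in> I" "r = i \<oplus> h" unfolding a_r_coset_def' by blast
        then show "r \<in> H" using Ha[OF _ hh(1)] sup H(1) by auto
      qed
      then show False using Hp HA by auto
    qed
  next
    show "\<Union> ((\<lambda>H. a_r_coset R I ` H) ` C) = carrier (R Quot I)"
    proof
      show "\<Union> ((\<lambda>H. a_r_coset R I ` H) ` C) \<subseteq> carrier (R Quot I)"
      proof (rule Union_least, clarify)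
        fix H x assume "H \<in> C" "x \<in> H"
        then have "x \<in> carrier R" using Cu by blast
        then show "I +> x \<in> carrier (R Quot I)" by (rule h.hom_closed)
      qed
      show "carrier (R Quot I) \<subseteq> \<Union> ((\<lambda>H. a_r_coset R I ` H) ` C)"
      proof
        fix x assume "x \<in> carrier (R Quot I)"
        then obtain a where a: "a \<in> carrier R" "x = I +> a"
          unfolding FactRing_def A_RCOSETS_def' by auto
        then obtain H where "H \<in> C" "a \<in> H" using Cu by auto
        then show "x \<in> \<Union> ((\<lambda>H. a_r_coset R I ` H) ` C)" using a by auto
      qed
    qed
  qed
qed

lemma ecard_image_le: "finite C \<Longrightarrow> ecard (f ` C) \<le> ecard C"
  unfolding ecard_def by (simp add: card_image_le)

context AR begin

lemma ideal_J: "ideal Jr RR"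
proof (rule idealI[OF ring_R])
  interpret ring RR by (rule ring_R)
  show "subgroup Jr (add_monoid RR)"
  proof
    show "Jr \<subseteq> carrier (add_monoid RR)" using J_sub by simp
    show "\<And>x y. x \<in> Jr \<Longrightarrow> y \<in> Jr \<Longrightarrow> x \<otimes>\<^bsub>add_monoid RR\<^esub> y \<in> Jr" using J_add by simp
    show "\<one>\<^bsub>add_monoid RR\<^esub> \<in> Jr" using J_z by simp
    show "\<And>x. x \<in> Jr \<Longrightarrow> inv\<^bsub>add_monoid RR\<^esub> x \<in> Jr"
      using J_neg a_inv_R J_sub by (metis a_inv_def subsetD)
  qed
  show "\<And>a x. a \<in> Jr \<Longrightarrow> x \<in> carrier RR \<Longrightarrow> x \<otimes>\<^bsub>RR\<^esub> a \<in> Jr" using AJ by simp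
  show "\<And>a x. a \<in> Jr \<Longrightarrow> x \<in> carrier RR \<Longrightarrow> a \<otimes>\<^bsub>RR\<^esub> x \<in> Jr" using JA by simp
qed



lemma nsubE: assumes "nsubring RR H"
  shows "H \<subseteq> Am" "mz \<in> H" "\<And>a. a \<in> H \<Longrightarrow> mneg a \<in> H"
    "\<And>a b. a \<in> H \<Longrightarrow> b \<in> H \<Longrightarrow> madd a b \<in> H"
    "\<And>a b. a \<in> H \<Longrightarrow> b \<in> H \<Longrightarrow> mm a b \<in> H"
  using assms unfolding nsub_iff by auto

lemma finite_sets_Am: "(\<And>H. H \<in> C \<Longrightarrow> H \<subseteq> Am) \<Longrightarrow> finite C"
  by (rule finite_subset[of _ "Pow Am"]) (use finite_Am in auto)

lemma lower_bound:
  assumes n1: "1 \<le> n" and LU: "LL K1 K2 = UNIV"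
    and se: "sigma_elementary RR"
    and MM: "\<forall>M\<in>MM. maximal_subring_of RR Sd M"
    "(\<Union>x \<in> Jr - {mz}. centralizer_in RR Sd x) \<subseteq> \<Union>MM"
    and MMmin: "\<And>MM'. (\<forall>M\<in>MM'. maximal_subring_of RR Sd M) \<and>
        (\<Union>x \<in> Jr - {mz}. centralizer_in RR Sd x) \<subseteq> \<Union>MM' \<Longrightarrow> card MM \<le> card MM'"
  shows "enat (card Jr + card MM) \<le> sigma RR"
proof -
  have cov: "is_cover RR (scompl RR Jr \<union> (\<lambda>M. ssum RR M Jr) ` MM)"
    by (rule cover_part[OF n1 MM])
  obtain C0 where C0: "is_cover RR C0" "ecard C0 = sigma RR"
    using sigma_attained[OF cov] by blast
  have C0m: "\<And>H. H \<in> C0 \<Longrightarrow> nsubring RR H \<and> H \<noteq> Am" and C0u: "\<Union>C0 = Am"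
    using C0(1) unfolding is_cover_def by auto
  have finC0: "finite C0" by (rule finite_sets_Am) (use C0m nsubE in blast)
  define mx where "mx = (\<lambda>H. SOME M. maxR M \<and> H \<subseteq> M)"
  have mxp: "maxR (mx H) \<and> H \<subseteq> mx H" if "H \<in> C0" for H
    unfolding mx_def by (rule someI_ex) (use exists_maxR C0m[OF that] in blast)
  define C' where "C' = mx ` C0"
  have finC': "finite C'" unfolding C'_def using finC0 by simp
  have cardC': "card C' \<le> card C0" unfolding C'_def by (rule card_image_le[OF finC0])
  have C'max: "\<And>H. H \<in> C' \<Longrightarrow> maxR H" unfolding C'_def using mxp by auto
  have C'n: "\<And>H. H \<in> C' \<Longrightarrow> nsubring RR H" using C'max unfolding maxR_def by auto
  have C'cov: "\<exists>H\<in>C'. r \<in> H" if rA: "r \<in> Am" for r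
  proof -
    obtain H where "H \<in> C0" "r \<in> H" using C0u rA by blast
    then show ?thesis unfolding C'_def using mxp by blast
  qed
  define A where "A = {H \<in> C'. Jr \<subseteq> H}"
  define B where "B = {H \<in> C'. \<not> Jr \<subseteq> H}"
  have finA: "finite A" and finB: "finite B" using finC' unfolding A_def B_def by auto
  have Bprop: "H \<inter> Jr = {mz} \<and> ssum RR H Jr = Am" if "H \<in> B" for H
    using that maxR_noJ[OF LU C'max] unfolding B_def by auto
  have "\<exists>s\<in>Sd. \<forall>H\<in>A. s \<notin> H"
  proof (rule ccontr)
    assume "\<not> ?thesis"
    then have allS: "\<And>s. s \<in> Sd \<Longrightarrow> \<exists>H\<in>A. s \<in> H" by blast
    have Acov: "is_cover RR A" unfolding is_cover_def
    proof (rule conjI[OF ballI])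
      fix H assume "H \<in> A"
      then show "nsubring RR H \<and> H \<noteq> carrier RR" using C'max unfolding A_def maxR_def by auto
    next
      show "\<Union>A = carrier RR"
      proof
        show "\<Union>A \<subseteq> carrier RR" using C'n nsubE unfolding A_def by auto
        show "carrier RR \<subseteq> \<Union>A"
        proof
          fix r assume "r \<in> carrier RR"
          then have r: "r \<in> Am" by simp
          obtain H where H: "H \<in> A" "dpart r \<in> H" using allS dpart_S[OF r] by blast
          have Hn: "nsubring RR H" "Jr \<subseteq> H" using H C'n unfolding A_def by auto
          have "madd (dpart r) (jpart r) \<in> H" using nsubE(4)[OF Hn(1) H(2)] Hn(2) jpart_J by blast
          then show "r \<in> \<Union>A" using dj_sum[of r] H by auto
        qed
      qed
    qed
    have qc: "is_cover (RR Quot Jr) ((\<lambda>H. a_r_coset RR Jr ` H) ` A)"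
      by (rule quot_cover[OF ideal_J Acov]) (simp add: A_def)
    have "sigma (RR Quot Jr) \<le> ecard ((\<lambda>H. a_r_coset RR Jr ` H) ` A)" by (rule sigma_le[OF qc])
    also have "\<dots> \<le> ecard A" by (rule ecard_image_le[OF finA])
    also have "\<dots> \<le> ecard C0"
    proof -
      have "card A \<le> card C'" unfolding A_def by (rule card_mono[OF finC']) auto
      then show ?thesis using cardC' finA finC0 by (simp add: ecard_def)
    qed
    also have "\<dots> = sigma RR" by (rule C0(2))
    finally have "sigma (RR Quot Jr) \<le> sigma RR" .
    moreover have "sigma RR < sigma (RR Quot Jr)"
    proof -
      have "Jr \<noteq> {zero RR}" using J_nonzero[OF n1] by auto
      then show ?thesis using se ideal_J unfolding sigma_elementary_def by blast
    qed
    ultimately show False by simp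
  qed
  then obtain s where s: "s \<in> Sd" "\<And>H. H \<in> A \<Longrightarrow> s \<notin> H" by blast
  have sA: "s \<in> Am" using s S_sub by auto
  define g where "g = (\<lambda>x. SOME H. H \<in> C' \<and> madd s x \<in> H)"
  have gp: "g x \<in> C' \<and> madd s x \<in> g x" if x: "x \<in> Jr" for x
  proof -
    have "madd s x \<in> Am" using add_closed sA x J_sub by auto
    then show ?thesis unfolding g_def using C'cov by (metis (no_types, lifting) someI_ex)
  qed
  have gB: "g x \<in> B" if x: "x \<in> Jr" for x
  proof -
    have "\<not> Jr \<subseteq> g x"
    proof
      assume J: "Jr \<subseteq> g x"
      have n: "nsubring RR (g x)" using gp[OF x] C'n by auto
      have mx: "mneg x \<in> g x" by (rule nsubE(3)[OF n]) (use J x in blast)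
      have "madd (madd s x) (mneg x) \<in> g x" by (rule nsubE(4)[OF n]) (use gp[OF x] mx in auto)
      then have "s \<in> g x" by simp
      moreover have "g x \<in> A" unfolding A_def using gp[OF x] J by auto
      ultimately show False using s(2) by blast
    qed
    then show ?thesis unfolding B_def using gp[OF x] by auto
  qed
  have ginj: "inj_on g Jr"
  proof (rule inj_onI)
    fix x y assume x: "x \<in> Jr" and y: "y \<in> Jr" and e: "g x = g y"
    let ?H = "g x"
    have n: "nsubring RR ?H" using gp[OF x] C'n by auto
    have my: "mneg (madd s y) \<in> ?H" by (rule nsubE(3)[OF n]) (use gp[OF y] e in auto)
    have "madd (madd s x) (mneg (madd s y)) \<in> ?H" by (rule nsubE(4)[OF n]) (use gp[OF x] my in auto)
    moreover have "madd (madd s x) (mneg (madd s y)) = madd x (mneg y)" by (auto simp: fun_eq_iff)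
    moreover have "madd x (mneg y) \<in> Jr" by (intro J_add J_neg x y)
    ultimately have "madd x (mneg y) \<in> ?H \<inter> Jr" by simp
    then have "madd x (mneg y) = mz" using Bprop[OF gB[OF x]] by auto
    then show "x = y" by (auto simp: fun_eq_iff)
  qed
  have cB: "card Jr \<le> card B" by (rule card_inj_on_le[OF ginj _ finB]) (use gB in blast)
  define MM'' where "MM'' = (\<lambda>H. H \<inter> Sd) ` A"
  have MM''max: "\<forall>M\<in>MM''. maximal_subring_of RR Sd M"
    unfolding MM''_def A_def using maxR_J C'max by auto
  have MM''cov: "(\<Union>x \<in> Jr - {mz}. centralizer_in RR Sd x) \<subseteq> \<Union>MM''"
  proof
    fix s' assume "s' \<in> (\<Union>x \<in> Jr - {mz}. centralizer_in RR Sd x)"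
    then obtain v where v: "v \<in> Jr" "v \<noteq> mz" "s' \<in> centralizer_in RR Sd v" by blast
    have s': "s' \<in> Sd" "mm s' v = mm v s'" using v(3) unfolding centr by auto
    have s'A: "s' \<in> Am" using s' S_sub by auto
    have ninj: "\<not> inj_on (com s') Jr"
    proof
      assume "inj_on (com s') Jr"
      moreover have "com s' v = com s' mz" using s'(2) com_zero_iff com_z by (simp add: com_def mm_lin)
      ultimately show False using v J_z by (meson inj_onD)
    qed
    have "com s' ` Jr \<noteq> Jr"
    proof
      assume e: "com s' ` Jr = Jr"
      have "inj_on (com s') Jr" unfolding inj_on_iff_eq_card[OF finite_J] e by (rule refl)
      then show False using ninj by simp
    qed
    moreover have "com s' ` Jr \<subseteq> Jr" using com_J[OF s'A] by auto
    ultimately obtain y where y: "y \<in> Jr" "y \<notin> com s' ` Jr" by blast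
    have "madd s' y \<in> Am" using add_closed s'A y J_sub by auto
    then obtain H where H: "H \<in> C'" "madd s' y \<in> H" using C'cov by blast
    have HJ: "Jr \<subseteq> H"
    proof (rule ccontr)
      assume "\<not> Jr \<subseteq> H"
      then have "H \<in> B" unfolding B_def using H by auto
      then have "H \<in> scompl RR Jr" using Bprop C'n H(1) unfolding scompl_def by auto
      then obtain z where z: "z \<in> Jr" "H = Tz z" using scompl_Tz by blast
      have "y = com s' z" by (rule Tz_unique[OF z(1) s'(1) y(1)]) (use H z in simp)
      then show False using y z by auto
    qed
    have n: "nsubring RR H" using H C'n by auto
    have my: "mneg y \<in> H" by (rule nsubE(3)[OF n]) (use HJ y in blast)
    have "madd (madd s' y) (mneg y) \<in> H" by (rule nsubE(4)[OF n]) (use H my in auto)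
    then have "s' \<in> H" by simp
    moreover have "H \<in> A" unfolding A_def using H HJ by auto
    ultimately show "s' \<in> \<Union>MM''" unfolding MM''_def using s' by auto
  qed
  have "card MM \<le> card MM''" by (rule MMmin) (use MM''max MM''cov in blast)
  also have "\<dots> \<le> card A" unfolding MM''_def by (rule card_image_le[OF finA])
  finally have cA: "card MM \<le> card A" .
  have "C' = A \<union> B" "A \<inter> B = {}" unfolding A_def B_def by auto
  then have "card C' = card A + card B" using finA finB by (simp add: card_Un_disjoint)
  then have "card Jr + card MM \<le> card C0" using cA cB cardC' by linarith
  then have "enat (card Jr + card MM) \<le> enat (card C0)" by simp
  also have "enat (card C0) = sigma RR" using C0(2) finC0 by (simp add: ecard_def)
  finally show ?thesis .
qed


end

context AR begin

lemma main_AR: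
  fixes p d1 d2 q :: nat and MM :: "(nat \<Rightarrow> nat \<Rightarrow> 'a) set set"
  assumes n1: "1 \<le> n" and p: "prime p" and d1: "1 \<le> d1" and d2: "1 \<le> d2"
    and qd: "q = p ^ lcm d1 d2"
    and cU: "card (UNIV :: 'a set) = q"
    and c1: "card K1 = p ^ d1" and c2: "card K2 = p ^ d2"
    and MM: "(\<forall>M\<in>MM. maximal_subring_of RR Sd M) \<and>
       (\<Union>x \<in> Jr - {zero RR}. centralizer_in RR Sd x) \<subseteq> \<Union>MM"
    and MMmin: "\<And>MM'. (\<forall>M\<in>MM'. maximal_subring_of RR Sd M) \<and>
       (\<Union>x \<in> Jr - {zero RR}. centralizer_in RR Sd x) \<subseteq> \<Union>MM' \<Longrightarrow> card MM \<le> card MM'"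
  shows "is_cover RR (scompl RR Jr \<union> (\<lambda>M. ssum RR M Jr) ` MM)
    \<and> (sigma_elementary RR \<longrightarrow> minimal_cover RR (scompl RR Jr \<union> (\<lambda>M. ssum RR M Jr) ` MM))
    \<and> real (card ((\<lambda>M. ssum RR M Jr) ` MM)) \<le> (real (card Jr) - 1) / (real q - 1)
    \<and> (real (card Jr) - 1) / (real q - 1) = (real q ^ n - 1) / (real q - 1)
    \<and> (sigma_elementary RR \<longrightarrow>
         enat (q ^ n + 1) \<le> sigma RR \<and> sigma RR \<le> enat ((q ^ (n + 1) - 1) div (q - 1)))"
proof -
  let ?Z = "(\<lambda>M. ssum RR M Jr) ` MM"
  let ?C = "scompl RR Jr \<union> ?Z"
  have MM1: "\<forall>M\<in>MM. maximal_subring_of RR Sd M" and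
    MM2: "(\<Union>x \<in> Jr - {mz}. centralizer_in RR Sd x) \<subseteq> \<Union>MM" using MM by auto
  have MMmin': "\<And>MM'. (\<forall>M\<in>MM'. maximal_subring_of RR Sd M) \<and>
       (\<Union>x \<in> Jr - {mz}. centralizer_in RR Sd x) \<subseteq> \<Union>MM' \<Longrightarrow> card MM \<le> card MM'"
    using MMmin by simp
  have p2: "2 \<le> p" using p by (simp add: prime_ge_2_nat)
  have lpos: "0 < lcm d1 d2" using d1 d2 by (simp add: lcm_pos_nat)
  have "p ^ 1 \<le> p ^ lcm d1 d2" by (rule power_increasing) (use lpos p2 in auto)
  then have q2: "2 \<le> q" unfolding qd using p2 by simp
  have cJ: "card Jr = q ^ n" using card_J cU by simp
  have qn1: "1 \<le> q ^ n" using q2 by simp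
  have cov: "is_cover RR ?C" by (rule cover_part[OF n1 MM1 MM2])
  have finMM: "finite MM" by (rule finite_subsets_S) (use MM1 in \<open>auto simp: maximal_subring_of_def\<close>)
  obtain MM0 where MM0: "\<forall>M\<in>MM0. maximal_subring_of RR Sd M"
     "(\<Union>x \<in> Jr - {mz}. centralizer_in RR Sd x) \<subseteq> \<Union>MM0" "card MM0 * (q - 1) \<le> card Jr - 1"
    using small_MM cU by auto
  have "card MM \<le> card MM0" by (rule MMmin') (use MM0 in blast)
  then have cM: "card MM * (q - 1) \<le> q ^ n - 1" using MM0(3) cJ
    by (metis le_trans mult_le_mono1)
  have cZ: "card ?Z \<le> card MM" by (rule card_image_le[OF finMM])
  have finS: "finite (scompl RR Jr)" unfolding scompl_eq using finite_J by simp
  have cC: "card ?C \<le> q ^ n + card MM"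
  proof -
    have "card ?C \<le> card (scompl RR Jr) + card ?Z" by (rule card_Un_le)
    also have "\<dots> \<le> q ^ n + card MM" using card_scompl cJ cZ by linarith
    finally show ?thesis .
  qed
  have finC: "finite ?C" using finS finMM by simp
  have sig_up: "sigma RR \<le> enat (q ^ n + card MM)"
  proof -
    have "sigma RR \<le> ecard ?C" by (rule sigma_le[OF cov])
    also have "\<dots> = enat (card ?C)" using finC by (simp add: ecard_def)
    also have "\<dots> \<le> enat (q ^ n + card MM)" using cC by simp
    finally show ?thesis .
  qed
  have part3: "real (card ?Z) \<le> (real (card Jr) - 1) / (real q - 1)"
  proof -
    have "card ?Z * (q - 1) \<le> q ^ n - 1" using cZ cM by (meson le_trans mult_le_mono1)
    then have "real (card ?Z * (q - 1)) \<le> real (q ^ n - 1)" by (simp only: of_nat_le_iff)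
    then have "real (card ?Z) * (real q - 1) \<le> real q ^ n - 1" using q2 qn1
      by (simp add: of_nat_diff)
    moreover have "real (card Jr) - 1 = real q ^ n - 1" using cJ by simp
    moreover have "0 < real q - 1" using q2 by simp
    ultimately show ?thesis by (simp add: pos_le_divide_eq)
  qed
  have part4: "(real (card Jr) - 1) / (real q - 1) = (real q ^ n - 1) / (real q - 1)"
    using cJ by simp
  have LU: "LL K1 K2 = UNIV"
    by (rule compositum[OF sf1 sf2 p d1 d2 c1 c2]) (use cU qd in simp)
  have lower: "sigma_elementary RR \<Longrightarrow> enat (q ^ n + card MM) \<le> sigma RR"
    using lower_bound[OF n1 LU _ MM1 MM2 MMmin'] cJ by simp
  have MMne: "1 \<le> card MM"
  proof -
    obtain v where v: "v \<in> Jr" "v \<noteq> mz" using J_nonzero[OF n1] by blast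
    have "mz \<in> centralizer_in RR Sd v" unfolding centr using S_z by (simp add: mm_lin)
    then have "mz \<in> \<Union>MM" using MM2 v by blast
    then have "MM \<noteq> {}" by auto
    then show ?thesis using finMM by (simp add: Suc_le_eq card_gt_0_iff)
  qed
  have arith: "q ^ n + card MM \<le> (q ^ (n + 1) - 1) div (q - 1)"
  proof -
    have q1: "0 < q - 1" using q2 by simp
    have "card MM \<le> (q ^ n - 1) div (q - 1)" using cM q1 by (simp add: less_eq_div_iff_mult_less_eq)
    moreover have "(q ^ (n + 1) - 1) div (q - 1) = (q ^ n - 1) div (q - 1) + q ^ n"
    proof -
      have e: "q ^ (n + 1) - 1 = (q ^ n - 1) + q ^ n * (q - 1)"
        using qn1 q2 by (simp add: algebra_simps diff_mult_distrib2)
      have "(q ^ (n + 1) - 1) div (q - 1) = ((q ^ n - 1) + q ^ n * (q - 1)) div (q - 1)"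
        unfolding e by (rule refl)
      also have "\<dots> = q ^ n + (q ^ n - 1) div (q - 1)" by (rule div_mult_self1) (use q1 in simp)
      finally show ?thesis by simp
    qed
    ultimately show ?thesis by simp
  qed
  show ?thesis
  proof (intro conjI impI)
    show "is_cover RR ?C" by (rule cov)
    show "real (card ?Z) \<le> (real (card Jr) - 1) / (real q - 1)" by (rule part3)
    show "(real (card Jr) - 1) / (real q - 1) = (real q ^ n - 1) / (real q - 1)" by (rule part4)
  next
    assume se: "sigma_elementary RR"
    have "ecard ?C = sigma RR"
    proof (rule antisym)
      have "ecard ?C = enat (card ?C)" using finC by (simp add: ecard_def)
      also have "\<dots> \<le> enat (q ^ n + card MM)" using cC by simp
      also have "\<dots> \<le> sigma RR" by (rule lower[OF se])
      finally show "ecard ?C \<le> sigma RR" .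
      show "sigma RR \<le> ecard ?C" by (rule sigma_le[OF cov])
    qed
    then show "minimal_cover RR ?C" unfolding minimal_cover_def using cov by simp
  next
    assume se: "sigma_elementary RR"
    have "enat (q ^ n + 1) \<le> enat (q ^ n + card MM)" using MMne by simp
    also have "\<dots> \<le> sigma RR" by (rule lower[OF se])
    finally show "enat (q ^ n + 1) \<le> sigma RR" .
  next
    assume se: "sigma_elementary RR"
    have "sigma RR \<le> enat (q ^ n + card MM)" by (rule sig_up)
    also have "\<dots> \<le> enat ((q ^ (n + 1) - 1) div (q - 1))" using arith by simp
    finally show "sigma RR \<le> enat ((q ^ (n + 1) - 1) div (q - 1))" .
  qed
qed

end

theorem proposition3p3:
  fixes p d1 d2 q1 q2 n :: nat
    and K1 K2 :: "'a::{field,finite} set"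
    and \<M> :: "(nat \<Rightarrow> nat \<Rightarrow> 'a) set set"
  defines "q \<equiv> p ^ lcm d1 d2"
  defines "R \<equiv> Aring n K1 K2"
  defines "S \<equiv> Sdiag n K1 K2"
  defines "J \<equiv> Jrad n :: (nat \<Rightarrow> nat \<Rightarrow> 'a) set"
  defines "U \<equiv> (\<Union>x \<in> J - {\<zero>\<^bsub>R\<^esub>}. centralizer_in R S x)"
  defines "\<Z> \<equiv> (\<lambda>M. ssum R M J) ` \<M>"
  assumes "n \<ge> 1" and "prime p" and "d1 \<ge> 1" and "d2 \<ge> 1"
    and "q1 = p ^ d1" and "q2 = p ^ d2"
    and "card (UNIV :: 'a set) = q"
    and "is_subfield K1" and "card K1 = q1"
    and "is_subfield K2" and "card K2 = q2"
    and "(\<forall>M\<in>\<M>. maximal_subring_of R S M) \<and> U \<subseteq> \<Union>\<M>"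
    and "\<And>\<M>'. (\<forall>M\<in>\<M>'. maximal_subring_of R S M) \<and> U \<subseteq> \<Union>\<M>' \<Longrightarrow> card \<M> \<le> card \<M>'"
  shows "is_cover R (scompl R J \<union> \<Z>)
    \<and> (sigma_elementary R \<longrightarrow> minimal_cover R (scompl R J \<union> \<Z>))
    \<and> real (card \<Z>) \<le> (real (card J) - 1) / (real q - 1)
    \<and> (real (card J) - 1) / (real q - 1) = (real q ^ n - 1) / (real q - 1)
    \<and> (sigma_elementary R \<longrightarrow>
         enat (q ^ n + 1) \<le> sigma R \<and> sigma R \<le> enat ((q ^ (n + 1) - 1) div (q - 1)))"
proof -
  interpret A: AR n K1 K2 by (rule AR.intro) (fact \<open>is_subfield K1\<close>, fact \<open>is_subfield K2\<close>)
  have qd: "q = p ^ lcm d1 d2" by (simp add: q_def)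
  have c1: "card K1 = p ^ d1" using \<open>card K1 = q1\<close> \<open>q1 = p ^ d1\<close> by simp
  have c2: "card K2 = p ^ d2" using \<open>card K2 = q2\<close> \<open>q2 = p ^ d2\<close> by simp
  have MMh: "(\<forall>M\<in>\<M>. maximal_subring_of (Aring n K1 K2) (Sdiag n K1 K2) M) \<and>
       (\<Union>x \<in> (Jrad n :: (nat \<Rightarrow> nat \<Rightarrow> 'a) set) - {zero (Aring n K1 K2)}. centralizer_in (Aring n K1 K2) (Sdiag n K1 K2) x) \<subseteq> \<Union>\<M>"
    using \<open>(\<forall>M\<in>\<M>. maximal_subring_of R S M) \<and> U \<subseteq> \<Union>\<M>\<close> unfolding U_def R_def S_def J_def .
  have MMm: "\<And>MM'. (\<forall>M\<in>MM'. maximal_subring_of (Aring n K1 K2) (Sdiag n K1 K2) M) \<and>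
       (\<Union>x \<in> (Jrad n :: (nat \<Rightarrow> nat \<Rightarrow> 'a) set) - {zero (Aring n K1 K2)}. centralizer_in (Aring n K1 K2) (Sdiag n K1 K2) x) \<subseteq> \<Union>MM' \<Longrightarrow> card \<M> \<le> card MM'"
    using assms(19) unfolding U_def R_def S_def J_def .
  show ?thesis unfolding \<Z>_def R_def J_def
    by (rule A.main_AR[OF \<open>n \<ge> 1\<close> \<open>prime p\<close> \<open>d1 \<ge> 1\<close> \<open>d2 \<ge> 1\<close> qd \<open>card (UNIV :: 'a set) = q\<close> c1 c2 MMh MMm])
qed

end
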